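(* Let $\tau>0$ and $\delta\in(0,\delta_0]$. There is a constant $c$ (independent of $a$ and $t$) such that for all $a\in\mathbb{R}$, $0<t\le\tau$ and $i,j,k\in\{1,\dots,d\}$: $$\int_{\mathbb{R}}\Big(\frac{(|a|+|w|)^2|w|^2}{(h_i^{-1}(1/t))^2}\wedge1\Big)\mu_i^{(\delta)}(w)dw\le c\,\frac{t^{\alpha/(2\beta)}+|a|^\alpha+|a|^2}{t},$$ $$\int_{\mathbb{R}}\Big(\frac{(|a|+|w|)|w|^2}{(h_i^{-1}(1/t))^2}\wedge1\Big)\mu_i^{(\delta)}(w)dw\le c\,\frac{t^{\alpha/(3\beta)}+|a|^{\alpha/2}+|a|}{t},$$ $$\int_{\mathbb{R}}\Big(\frac{(|a|+|w|)^2|w|^2}{h_i^{-1}(1/t)h_j^{-1}(1/t)}\wedge1\Big)\mu_k^{(\delta)}(w)dw\le c\big[|a|^\beta t^{-\beta/\alpha}+t^{-\beta/(2\alpha)}\big],$$ $$\int_{\mathbb{R}}\Big(\frac{(|a|+|w|)|w|^2}{(h_i^{-1}(1/t))^2}\wedge1\Big)\mu_k^{(\delta)}(w)dw\le c\big[|a|^{\beta/2}t^{-\beta/\alpha}+t^{-2\beta/(3\alpha)}\big].$$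
   Context: Fix $d\ge2$. For $i=1,\dots,d$, let $\nu_i:\mathbb{R}\setminus\{0\}\to[0,\infty)$ be a symmetric density of an infinite Lévy measure ($\int(x^2\wedge1)\nu_i<\infty$), with a common $\eta_4>0$ such that $\nu_i\in C^1(0,\eta_4)$, $\nu_i'<0$ and $-\nu_i'(x)/x$ decreasing on $(0,\eta_4)$; $\psi_i(\xi)=\int(1-\cos(\xi x))\nu_i(x)dx$ satisfies $\psi_i(\lambda\theta)\ge\underline{C}\lambda^\alpha\psi_i(\theta)$ ($\lambda\ge1,\theta\ge0$) and $\psi_i(\lambda\theta)\le\overline{C}\lambda^\beta\psi_i(\theta)$ ($\lambda\ge1,\theta\ge1$), common $0<\alpha\le\beta<2$, $\underline{C},\overline{C}>0$. $h_i(r)=\int(1\wedge x^2r^{-2})\nu_i(x)dx$ ($r>0$), continuous and strictly decreasing from $\infty$ to $0$; $h_i^{-1}$ its inverse. Truncation: $\delta_0\in(0,1/24]$ is such that for every $\delta\in(0,\delta_0]$ and every $i$ one fixes $\mu_i^{(\delta)}:\mathbb{R}\setminus\{0\}\to[0,\infty)$ with $\mu_i^{(\delta)}=\nu_i$ on $(0,\delta]$, $\mu_i^{(\delta)}\in[0,\nu_i]$ on $(\delta,2\delta)$, $\mu_i^{(\delta)}=0$ on $[2\delta,\infty)$, $\mu_i^{(\delta)}\in C^1(0,\infty)$ nonincreasing on $(0,\infty)$, $-(\mu_i^{(\delta)})'(x)/x$ nonincreasing, and symmetric. *)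

theory Defs
  imports "HOL-Analysis.Analysis"
begin

definition psi :: "(real \<Rightarrow> real) \<Rightarrow> real \<Rightarrow> real" where
  "psi \<nu> \<xi> = (LINT x|lborel. (1 - cos (\<xi> * x)) * \<nu> x)"

definition hfun :: "(real \<Rightarrow> real) \<Rightarrow> real \<Rightarrow> real" where
  "hfun \<nu> r = (LINT x|lborel. min 1 (x\<^sup>2 / r\<^sup>2) * \<nu> x)"

definition hinv :: "(real \<Rightarrow> real) \<Rightarrow> real \<Rightarrow> real" where
  "hinv \<nu> s = (THE r. 0 < r \<and> hfun \<nu> r = s)"

definition levy_assms ::
  "nat \<Rightarrow> (nat \<Rightarrow> real \<Rightarrow> real) \<Rightarrow> real \<Rightarrow> real \<Rightarrow> real \<Rightarrow> real \<Rightarrow> real \<Rightarrow> bool" where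
  "levy_assms d \<nu> \<eta>4 \<alpha> \<beta> Cl Cu \<longleftrightarrow>
     2 \<le> d \<and> 0 < \<eta>4 \<and> 0 < \<alpha> \<and> \<alpha> \<le> \<beta> \<and> \<beta> < 2 \<and> 0 < Cl \<and> 0 < Cu \<and>
     (\<forall>i\<in>{1..d}.
        \<nu> i \<in> borel_measurable borel \<and>
        (\<forall>x. x \<noteq> 0 \<longrightarrow> 0 \<le> \<nu> i x) \<and>
        (\<forall>x. \<nu> i (- x) = \<nu> i x) \<and>
        integrable lborel (\<lambda>x. min (x\<^sup>2) 1 * \<nu> i x) \<and>
        (\<integral>\<^sup>+ x. ennreal (\<nu> i x) \<partial>lborel) = \<infinity> \<and>
        (\<exists>D. (\<forall>x\<in>{0<..<\<eta>4}. (\<nu> i has_real_derivative D x) (at x)) \<and>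
             continuous_on {0<..<\<eta>4} D \<and>
             (\<forall>x\<in>{0<..<\<eta>4}. D x < 0) \<and>
             (\<forall>x\<in>{0<..<\<eta>4}. \<forall>y\<in>{0<..<\<eta>4}. x \<le> y \<longrightarrow> - D y / y \<le> - D x / x)) \<and>
        (\<forall>lam \<theta>. 1 \<le> lam \<and> 0 \<le> \<theta> \<longrightarrow> psi (\<nu> i) (lam * \<theta>) \<ge> Cl * lam powr \<alpha> * psi (\<nu> i) \<theta>) \<and>
        (\<forall>lam \<theta>. 1 \<le> lam \<and> 1 \<le> \<theta> \<longrightarrow> psi (\<nu> i) (lam * \<theta>) \<le> Cu * lam powr \<beta> * psi (\<nu> i) \<theta>))"

definition trunc_assms ::
  "nat \<Rightarrow> (nat \<Rightarrow> real \<Rightarrow> real) \<Rightarrow> real \<Rightarrow> (real \<Rightarrow> nat \<Rightarrow> real \<Rightarrow> real) \<Rightarrow> bool" where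
  "trunc_assms d \<nu> \<delta>0 \<mu> \<longleftrightarrow>
     0 < \<delta>0 \<and> \<delta>0 \<le> 1/24 \<and>
     (\<forall>\<delta>\<in>{0<..\<delta>0}. \<forall>i\<in>{1..d}.
        (\<forall>x\<in>{0<..\<delta>}. \<mu> \<delta> i x = \<nu> i x) \<and>
        (\<forall>x\<in>{\<delta><..<2*\<delta>}. 0 \<le> \<mu> \<delta> i x \<and> \<mu> \<delta> i x \<le> \<nu> i x) \<and>
        (\<forall>x. 2*\<delta> \<le> x \<longrightarrow> \<mu> \<delta> i x = 0) \<and>
        (\<forall>x. \<mu> \<delta> i (- x) = \<mu> \<delta> i x) \<and>
        (\<exists>D. (\<forall>x\<in>{0<..}. (\<mu> \<delta> i has_real_derivative D x) (at x)) \<and>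
             continuous_on {0<..} D \<and>
             (\<forall>x\<in>{0<..}. \<forall>y\<in>{0<..}. x \<le> y \<longrightarrow> \<mu> \<delta> i y \<le> \<mu> \<delta> i x) \<and>
             (\<forall>x\<in>{0<..}. \<forall>y\<in>{0<..}. x \<le> y \<longrightarrow> - D y / y \<le> - D x / x)))"

end

theory Submission imports Defs begin

lemma one_minus_cos_le: "1 - cos (y::real) \<le> y\<^sup>2 / 2"
proof -
  have "cos y = 1 - 2 * sin (y/2) ^ 2" using cos_double_sin[of "y/2"] by simp
  moreover have "\<bar>sin (y/2)\<bar> \<le> \<bar>y/2\<bar>" by (rule abs_sin_x_le_abs_x)
  hence "sin (y/2) ^ 2 \<le> (y/2)^2" by (metis abs_le_square_iff power2_abs)
  ultimately show ?thesis by (simp add: power_divide)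
qed

lemma one_minus_cos_le2: "1 - cos (y::real) \<le> 2 * min (y\<^sup>2) 1"
proof -
  have "1 - cos y \<le> 2" using cos_ge_minus_one[of y] by linarith
  moreover have "0 \<le> y\<^sup>2" by simp
  moreover have "1 - cos y \<le> y\<^sup>2 / 2" by (rule one_minus_cos_le)
  ultimately show ?thesis
  proof (cases "y\<^sup>2 \<le> 1")
    case True
    then have "min (y\<^sup>2) 1 = y\<^sup>2" by simp
    then show ?thesis using \<open>1 - cos y \<le> y\<^sup>2 / 2\<close> \<open>0 \<le> y\<^sup>2\<close> by linarith
  next
    case False
    then have "min (y\<^sup>2) 1 = 1" by simp
    then show ?thesis using \<open>1 - cos y \<le> 2\<close> by linarith
  qed
qed

lemma one_minus_sinc_ge:
  fixes y :: real
  assumes "y \<noteq> 0"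
  shows "min (y\<^sup>2) 1 \<le> 15/2 * (1 - sin y / y)"
proof -
  have "sin y / y = sin (\<bar>y\<bar>) / \<bar>y\<bar>"
    by (cases "y \<ge> 0") (auto simp: abs_if)
  define z where "z = \<bar>y\<bar>"
  have z: "z > 0" using assms z_def by auto
  have sum5: "(\<Sum>m<5. sin_coeff m * z ^ m) = z - z^3/6"
    by (simp add: sin_coeff_Suc cos_coeff_Suc eval_nat_numeral)
  have bz: "\<bar>sin z - (z - z^3/6)\<bar> \<le> z^5/120"
    using Maclaurin_sin_bound[of z 5] z unfolding sum5
    by (simp add: eval_nat_numeral)
  have yz: "y\<^sup>2 = z\<^sup>2" by (simp add: z_def)
  have sy: "sin y / y = sin z / z" using \<open>sin y / y = sin (\<bar>y\<bar>) / \<bar>y\<bar>\<close> z_def by simp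
  show ?thesis
  proof (cases "z \<le> 2")
    case True
    have "sin z \<le> z - z^3/6 + z^5/120" using bz by linarith
    hence "sin z / z \<le> 1 - z^2/6 + z^4/120" using z
      by (simp add: divide_simps power_def algebra_simps)
    moreover have "z^4 \<le> 4 * z^2"
    proof -
      have "z^2 \<le> 2^2" using True z by (intro power_mono) auto
      hence "z^2 * z^2 \<le> 4 * z^2" by (intro mult_right_mono) auto
      moreover have "z^4 = z^2 * z^2" by algebra
      ultimately show ?thesis by linarith
    qed
    ultimately have "2/15 * z^2 \<le> 1 - sin z / z" by linarith
    hence "15/2 * (2/15 * z^2) \<le> 15/2 * (1 - sin z / z)" by (rule mult_left_mono) simp
    hence "z^2 \<le> 15/2 * (1 - sin z / z)" by simp
    thus ?thesis using yz sy by (simp add: min_def)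
  next
    case False
    have "sin z \<le> 1" by simp
    hence "sin z / z \<le> 1 / z" using z by (simp add: divide_right_mono)
    also have "\<dots> \<le> 1/2" using False by simp
    finally show ?thesis using sy by (simp add: min_def)
  qed
qed


lemma int_1mcos:
  fixes y :: real assumes "y \<noteq> 0"
  shows "((\<lambda>u. 1 - cos (u*y)) has_integral (1 - sin y / y)) {0..1}"
proof -
  have "((\<lambda>u. 1 - cos (u*y)) has_integral ((\<lambda>u. u - sin (u*y) / y) 1 - (\<lambda>u. u - sin (u*y) / y) 0)) {0..1}"
  proof (rule fundamental_theorem_of_calculus)
    fix x :: real assume "x \<in> {0..1}"
    have "((\<lambda>u. u - sin (u*y) / y) has_real_derivative (1 - cos (x*y))) (at x within {0..1})"
      using assms by (auto intro!: derivative_eq_intros)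
    thus "((\<lambda>u. u - sin (u*y) / y) has_vector_derivative (1 - cos (x*y))) (at x within {0..1})"
      by (simp add: has_real_derivative_iff_has_vector_derivative)
  qed simp
  thus ?thesis by simp
qed

lemma nn_1mcos:
  fixes y :: real assumes "y \<noteq> 0"
  shows "(\<integral>\<^sup>+u. ennreal (1 - cos (u*y)) * indicator {0..1} u \<partial>lborel) = ennreal (1 - sin y / y)"
  using nn_integral_has_integral_lebesgue'[OF _ int_1mcos[OF assms]]
  by (simp add: cos_le_one)

lemma min_scale:
  fixes c X :: real assumes "0 \<le> c" "0 \<le> X"
  shows "min (c*X) 1 \<le> max c 1 * min X 1"
proof (cases "X \<le> 1")
  case True
  have "c * X \<le> max c 1 * X" using assms by (intro mult_right_mono) auto
  thus ?thesis using True by (simp add: min_def)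
next
  case False
  have "min (c*X) 1 \<le> 1" by simp
  also have "1 \<le> max c 1" by simp
  finally show ?thesis using False by simp
qed

definition Jf :: "(real \<Rightarrow> real) \<Rightarrow> real \<Rightarrow> real" where
  "Jf \<nu> c = (LINT x|lborel. min (c * x\<^sup>2) 1 * \<nu> x)"

definition Hr :: "(real \<Rightarrow> real) \<Rightarrow> real \<Rightarrow> real \<Rightarrow> real" where
  "Hr \<nu> R c = (LINT x|lborel. (min (c * x\<^sup>2) 1 * indicator {x. \<bar>x\<bar> < R} x) * \<nu> x)"

locale dens =
  fixes \<nu> :: "real \<Rightarrow> real"
  assumes meas[measurable]: "\<nu> \<in> borel_measurable borel"
    and nn: "\<And>x. x \<noteq> 0 \<Longrightarrow> 0 \<le> \<nu> x"
    and intg: "integrable lborel (\<lambda>x. min (x\<^sup>2) 1 * \<nu> x)"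
begin

lemma int_bound:
  assumes [measurable]: "g \<in> borel_measurable borel" and b: "\<And>x. \<bar>g x\<bar> \<le> C * min (x\<^sup>2) 1"
  shows "integrable lborel (\<lambda>x. g x * \<nu> x)"
proof -
  have i: "integrable lborel (\<lambda>x. C * (min (x\<^sup>2) 1 * \<nu> x))" using intg by simp
  have m: "(\<lambda>x. g x * \<nu> x) \<in> borel_measurable lborel" by measurable
  have "AE x in lborel. norm (g x * \<nu> x) \<le> norm (C * (min (x\<^sup>2) 1 * \<nu> x))"
  proof (rule AE_I2)
    fix x
    show "norm (g x * \<nu> x) \<le> norm (C * (min (x\<^sup>2) 1 * \<nu> x))"
    proof (cases "x = 0")
      case True
      then show ?thesis using b[of 0] by simp
    next
      case False
      have "\<bar>g x\<bar> * \<bar>\<nu> x\<bar> \<le> C * min (x\<^sup>2) 1 * \<nu> x"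
        using b[of x] nn[OF False] by (simp add: mult_right_mono)
      also have "\<dots> \<le> \<bar>C * (min (x\<^sup>2) 1 * \<nu> x)\<bar>" by (simp add: mult.assoc)
      finally show ?thesis by (simp add: abs_mult)
    qed
  qed
  from Bochner_Integration.integrable_bound[OF i m this] show ?thesis .
qed

lemma J_int: "0 \<le> c \<Longrightarrow> integrable lborel (\<lambda>x. min (c * x\<^sup>2) 1 * \<nu> x)"
  by (rule int_bound[where C="max c 1"]) (auto intro!: min_scale)

lemma Hr_int: "0 \<le> c \<Longrightarrow> integrable lborel (\<lambda>x. (min (c * x\<^sup>2) 1 * indicator {x. \<bar>x\<bar> < R} x) * \<nu> x)"
proof (rule int_bound[where C="max c 1"])
  assume c: "0 \<le> c"
  show "(\<lambda>x. min (c * x\<^sup>2) 1 * indicator {x. \<bar>x\<bar> < R} x) \<in> borel_measurable borel"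
    by measurable
  fix x
  have "\<bar>min (c * x\<^sup>2) 1 * indicator {x. \<bar>x\<bar> < R} x\<bar> \<le> min (c * x\<^sup>2) 1"
    using c by (auto simp: indicator_def)
  also have "\<dots> \<le> max c 1 * min (x\<^sup>2) 1" using c by (intro min_scale) auto
  finally show "\<bar>min (c * x\<^sup>2) 1 * indicator {x. \<bar>x\<bar> < R} x\<bar> \<le> max c 1 * min (x\<^sup>2) 1" .
qed

lemma psi_int: "integrable lborel (\<lambda>x. (1 - cos (\<xi> * x)) * \<nu> x)"
proof (rule int_bound[where C="2 * max (\<xi>\<^sup>2) 1"])
  fix x
  have "\<bar>1 - cos (\<xi> * x)\<bar> = 1 - cos (\<xi> * x)" using cos_le_one[of "\<xi>*x"] by simp
  also have "\<dots> \<le> 2 * min ((\<xi>*x)\<^sup>2) 1" by (rule one_minus_cos_le2)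
  also have "\<dots> = 2 * min (\<xi>\<^sup>2 * x\<^sup>2) 1" by (simp add: power_mult_distrib)
  also have "\<dots> \<le> 2 * (max (\<xi>\<^sup>2) 1 * min (x\<^sup>2) 1)" by (intro mult_left_mono min_scale) auto
  finally show "\<bar>1 - cos (\<xi> * x)\<bar> \<le> 2 * max (\<xi>\<^sup>2) 1 * min (x\<^sup>2) 1" by simp
qed simp

lemma pt_nonneg: "0 \<le> g x \<Longrightarrow> g 0 = 0 \<Longrightarrow> 0 \<le> g x * \<nu> x"
  using nn[of x] by (cases "x = 0") auto

lemma J_nonneg: "0 \<le> c \<Longrightarrow> 0 \<le> Jf \<nu> c"
  unfolding Jf_def by (intro integral_nonneg_AE AE_I2 pt_nonneg[where g="\<lambda>x. min (c * x\<^sup>2) 1"]) auto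

lemma pt_mono: "(x \<noteq> 0 \<Longrightarrow> g1 x \<le> g2 x) \<Longrightarrow> g1 0 = 0 \<Longrightarrow> g2 0 = 0 \<Longrightarrow> g1 x * \<nu> x \<le> g2 x * \<nu> x"
  using nn[of x] by (cases "x = 0") (auto intro: mult_right_mono)

lemma hfun_eq: "0 < r \<Longrightarrow> hfun \<nu> r = Jf \<nu> (1/r\<^sup>2)"
  unfolding hfun_def Jf_def by (simp add: min.commute)

lemma psi_nonneg: "0 \<le> psi \<nu> \<xi>"
  unfolding psi_def by (intro integral_nonneg_AE AE_I2 pt_nonneg[where g="\<lambda>x. 1 - cos (\<xi> * x)"]) auto

lemma E1: "psi \<nu> \<xi> \<le> 2 * Jf \<nu> (\<xi>\<^sup>2)"
proof -
  have "psi \<nu> \<xi> \<le> (LINT x|lborel. (2 * min (\<xi>\<^sup>2 * x\<^sup>2) 1) * \<nu> x)"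
    unfolding psi_def
  proof (rule integral_mono)
    show "integrable lborel (\<lambda>x. (1 - cos (\<xi> * x)) * \<nu> x)" by (rule psi_int)
    show "integrable lborel (\<lambda>x. (2 * min (\<xi>\<^sup>2 * x\<^sup>2) 1) * \<nu> x)"
      using J_int[of "\<xi>\<^sup>2"] by (simp add: mult.assoc)
    fix x
    show "(1 - cos (\<xi> * x)) * \<nu> x \<le> (2 * min (\<xi>\<^sup>2 * x\<^sup>2) 1) * \<nu> x"
      using one_minus_cos_le2[of "\<xi> * x"] by (intro pt_mono) (auto simp: power_mult_distrib)
  qed
  also have "\<dots> = 2 * Jf \<nu> (\<xi>\<^sup>2)" unfolding Jf_def by (simp add: mult.assoc)
  finally show ?thesis .
qed

lemma J_le_max:
  assumes "0 \<le> c" "0 < c'"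
  shows "Jf \<nu> c \<le> max (c/c') 1 * Jf \<nu> c'"
proof -
  have "Jf \<nu> c \<le> (LINT x|lborel. (max (c/c') 1 * min (c' * x\<^sup>2) 1) * \<nu> x)"
    unfolding Jf_def
  proof (rule integral_mono)
    show "integrable lborel (\<lambda>x. min (c * x\<^sup>2) 1 * \<nu> x)" using J_int assms by simp
    show "integrable lborel (\<lambda>x. (max (c/c') 1 * min (c' * x\<^sup>2) 1) * \<nu> x)"
      using J_int[of c'] assms by (simp add: mult.assoc)
    fix x
    have "min (c * x\<^sup>2) 1 = min ((c/c') * (c' * x\<^sup>2)) 1" using assms by simp
    also have "\<dots> \<le> max (c/c') 1 * min (c' * x\<^sup>2) 1" using assms by (intro min_scale) auto
    finally have "min (c * x\<^sup>2) 1 \<le> max (c/c') 1 * min (c' * x\<^sup>2) 1" .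
    thus "min (c * x\<^sup>2) 1 * \<nu> x \<le> (max (c/c') 1 * min (c' * x\<^sup>2) 1) * \<nu> x"
      by (intro pt_mono) auto
  qed
  also have "\<dots> = max (c/c') 1 * Jf \<nu> c'" unfolding Jf_def by (simp add: mult.assoc)
  finally show ?thesis .
qed

lemma J_mono:
  assumes "0 \<le> c" "c \<le> c'"
  shows "Jf \<nu> c \<le> Jf \<nu> c'"
  unfolding Jf_def
proof (rule integral_mono)
  show "integrable lborel (\<lambda>x. min (c * x\<^sup>2) 1 * \<nu> x)" using J_int assms by simp
  show "integrable lborel (\<lambda>x. min (c' * x\<^sup>2) 1 * \<nu> x)" using J_int assms by simp
  fix x
  have "c * x\<^sup>2 \<le> c' * x\<^sup>2" using assms by (intro mult_right_mono) auto
  hence m: "min (c * x\<^sup>2) 1 \<le> min (c' * x\<^sup>2) 1" by (rule min.mono) simp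
  show "min (c * x\<^sup>2) 1 * \<nu> x \<le> min (c' * x\<^sup>2) 1 * \<nu> x"
    using m by (intro pt_mono) auto
qed

lemma Hr_nonneg: "0 \<le> c \<Longrightarrow> 0 \<le> Hr \<nu> R c"
  unfolding Hr_def
  by (intro integral_nonneg_AE AE_I2 pt_nonneg[where g="\<lambda>x. min (c * x\<^sup>2) 1 * indicator {x. \<bar>x\<bar> < R} x"]) auto

lemma Hr_le_J:
  assumes "0 \<le> c"
  shows "Hr \<nu> R c \<le> Jf \<nu> c"
  unfolding Jf_def Hr_def
proof (rule integral_mono)
  show "integrable lborel (\<lambda>x. min (c * x\<^sup>2) 1 * \<nu> x)" using J_int assms by simp
  show "integrable lborel (\<lambda>x. (min (c * x\<^sup>2) 1 * indicator {x. \<bar>x\<bar> < R} x) * \<nu> x)"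
    using Hr_int assms by simp
  fix x
  show "(min (c * x\<^sup>2) 1 * indicator {x. \<bar>x\<bar> < R} x) * \<nu> x \<le> min (c * x\<^sup>2) 1 * \<nu> x"
    using assms by (intro pt_mono) (auto simp: indicator_def)
qed

lemma Hr_le_lin:
  assumes "0 \<le> c" "R \<le> 1"
  shows "Hr \<nu> R c \<le> c * Jf \<nu> 1"
proof -
  have "Hr \<nu> R c \<le> (LINT x|lborel. (c * min (1 * x\<^sup>2) 1) * \<nu> x)"
    unfolding Hr_def
  proof (rule integral_mono)
    show "integrable lborel (\<lambda>x. (c * min (1 * x\<^sup>2) 1) * \<nu> x)"
      using J_int[of 1] by (simp add: mult.assoc)
    show "integrable lborel (\<lambda>x. (min (c * x\<^sup>2) 1 * indicator {x. \<bar>x\<bar> < R} x) * \<nu> x)"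
      using Hr_int assms by simp
    fix x
    have "min (c * x\<^sup>2) 1 * indicator {x. \<bar>x\<bar> < R} x \<le> c * min (1 * x\<^sup>2) 1"
    proof (cases "\<bar>x\<bar> < R")
      case True
      hence "\<bar>x\<bar> \<le> 1" using assms by simp
      hence "\<bar>x\<bar>^2 \<le> 1^2" by (intro power_mono) auto
      hence "x\<^sup>2 \<le> 1" by simp
      hence "min (1 * x\<^sup>2) 1 = x\<^sup>2" by simp
      thus ?thesis using True by (simp add: indicator_def)
    next
      case False
      thus ?thesis using assms by (simp add: indicator_def)
    qed
    thus "(min (c * x\<^sup>2) 1 * indicator {x. \<bar>x\<bar> < R} x) * \<nu> x \<le> (c * min (1 * x\<^sup>2) 1) * \<nu> x"
      by (intro pt_mono) auto
  qed
  also have "\<dots> = c * Jf \<nu> 1" unfolding Jf_def by (simp add: mult.assoc)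
  finally show ?thesis .
qed

lemma nn_psi: "(\<integral>\<^sup>+x. ennreal ((1 - cos (\<xi> * x)) * \<nu> x) \<partial>lborel) = ennreal (psi \<nu> \<xi>)"
  unfolding psi_def
  by (intro nn_integral_eq_integral psi_int AE_I2 pt_nonneg[where g="\<lambda>x. 1 - cos (\<xi> * x)"]) auto

lemma nn_J: "0 \<le> c \<Longrightarrow> (\<integral>\<^sup>+x. ennreal (min (c * x\<^sup>2) 1 * \<nu> x) \<partial>lborel) = ennreal (Jf \<nu> c)"
  unfolding Jf_def
  by (intro nn_integral_eq_integral J_int AE_I2 pt_nonneg[where g="\<lambda>x. min (c * x\<^sup>2) 1"]) auto

lemma E2:
  assumes xi: "0 < \<xi>" and P: "\<And>u. u \<in> {0..1} \<Longrightarrow> psi \<nu> (u*\<xi>) \<le> P0" and P0: "0 \<le> P0"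
  shows "Jf \<nu> (\<xi>\<^sup>2) \<le> 15/2 * P0"
proof -
  define F where "F u x = ennreal (15/2) * (ennreal ((1 - cos (u*\<xi>*x)) * \<nu> x) * indicator {0..1::real} u)" for u x :: real
  have Fm: "case_prod F \<in> borel_measurable (lborel \<Otimes>\<^sub>M lborel)"
    unfolding F_def by measurable
  have pt: "ennreal (min (\<xi>\<^sup>2 * x\<^sup>2) 1 * \<nu> x) \<le> (\<integral>\<^sup>+u. F u x \<partial>lborel)" for x
  proof (cases "x = 0")
    case True thus ?thesis by simp
  next
    case False
    define y where "y = \<xi> * x"
    have y0: "y \<noteq> 0" using False xi by (simp add: y_def)
    have nx: "0 \<le> \<nu> x" using nn False by simp
    have "(\<integral>\<^sup>+u. F u x \<partial>lborel) = (\<integral>\<^sup>+u. (ennreal (1 - cos (u*y)) * indicator {0..1} u) * (ennreal (15/2) * ennreal (\<nu> x)) \<partial>lborel)"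
      unfolding F_def y_def
      by (intro nn_integral_cong) (simp add: ennreal_mult' nx cos_le_one mult_ac)
    also have "\<dots> = ennreal (1 - sin y / y) * (ennreal (15/2) * ennreal (\<nu> x))"
      by (subst nn_integral_multc) (auto simp: nn_1mcos[OF y0])
    also have "\<dots> = ennreal (15/2 * (1 - sin y / y) * \<nu> x)"
    proof -
      have "sin y / y \<le> 1"
      proof -
        have "\<bar>sin y\<bar> \<le> \<bar>y\<bar>" by (rule abs_sin_x_le_abs_x)
        hence "\<bar>sin y / y\<bar> \<le> 1" using y0 by (simp add: abs_divide divide_le_eq_1)
        thus ?thesis by (metis abs_le_D1)
      qed
      thus ?thesis using nx by (simp add: ennreal_mult'[symmetric] ennreal_mult''[symmetric] mult.commute mult.left_commute)
    qed
    finally have eq: "(\<integral>\<^sup>+u. F u x \<partial>lborel) = ennreal (15/2 * (1 - sin y / y) * \<nu> x)" .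
    have "min (\<xi>\<^sup>2 * x\<^sup>2) 1 = min (y\<^sup>2) 1" by (simp add: y_def power_mult_distrib)
    also have "\<dots> \<le> 15/2 * (1 - sin y / y)" by (rule one_minus_sinc_ge[OF y0])
    finally have "min (\<xi>\<^sup>2 * x\<^sup>2) 1 * \<nu> x \<le> 15/2 * (1 - sin y / y) * \<nu> x"
      using nx by (rule mult_right_mono)
    thus ?thesis unfolding eq by (rule ennreal_leI)
  qed
  have "ennreal (Jf \<nu> (\<xi>\<^sup>2)) = (\<integral>\<^sup>+x. ennreal (min (\<xi>\<^sup>2 * x\<^sup>2) 1 * \<nu> x) \<partial>lborel)"
    by (rule nn_J[symmetric]) simp
  also have "\<dots> \<le> (\<integral>\<^sup>+x. (\<integral>\<^sup>+u. F u x \<partial>lborel) \<partial>lborel)"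
    by (rule nn_integral_mono) (rule pt)
  also have "\<dots> = (\<integral>\<^sup>+u. (\<integral>\<^sup>+x. F u x \<partial>lborel) \<partial>lborel)"
    by (rule lborel_pair.Fubini'[OF Fm])
  also have "\<dots> = (\<integral>\<^sup>+u. ennreal (15/2) * (ennreal (psi \<nu> (u*\<xi>)) * indicator {0..1} u) \<partial>lborel)"
  proof (rule nn_integral_cong)
    fix u :: real
    have "(\<integral>\<^sup>+x. F u x \<partial>lborel) = ennreal (15/2) * (\<integral>\<^sup>+x. ennreal ((1 - cos (u*\<xi>*x)) * \<nu> x) * indicator {0..1::real} u \<partial>lborel)"
      unfolding F_def by (rule nn_integral_cmult) measurable
    also have "\<dots> = ennreal (15/2) * ((\<integral>\<^sup>+x. ennreal ((1 - cos (u*\<xi>*x)) * \<nu> x) \<partial>lborel) * indicator {0..1::real} u)"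
      by (subst nn_integral_multc) auto
    also have "\<dots> = ennreal (15/2) * (ennreal (psi \<nu> (u*\<xi>)) * indicator {0..1} u)"
      by (simp add: nn_psi)
    finally show "(\<integral>\<^sup>+x. F u x \<partial>lborel) = ennreal (15/2) * (ennreal (psi \<nu> (u*\<xi>)) * indicator {0..1} u)" .
  qed
  also have "\<dots> \<le> (\<integral>\<^sup>+u. ennreal (15/2) * (ennreal P0 * indicator {0..1::real} u) \<partial>lborel)"
  proof -
    have "ennreal (15/2) * (ennreal (psi \<nu> (u*\<xi>)) * indicator {0..1} u) \<le> ennreal (15/2) * (ennreal P0 * indicator {0..1} u)" for u :: real
      using P[of u] by (cases "u \<in> {0..1}") (auto intro!: mult_left_mono ennreal_leI)
    thus ?thesis by (intro nn_integral_mono)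
  qed
  also have "\<dots> = ennreal (15/2 * P0)"
    using P0 by (simp add: nn_integral_cmult nn_integral_multc ennreal_mult'[symmetric])
  finally show ?thesis using P0 by (simp add: ennreal_le_iff)
qed

end

lemma integral_pos_lborel:
  fixes f :: "real \<Rightarrow> real"
  assumes i: "integrable lborel f" and nn: "\<And>x. 0 \<le> f x"
    and p: "\<And>x. 0 < x \<Longrightarrow> x < m \<Longrightarrow> 0 < f x" and m: "0 < m"
  shows "0 < integral\<^sup>L lborel f"
proof -
  have ge: "0 \<le> integral\<^sup>L lborel f" by (intro integral_nonneg_AE AE_I2 nn)
  have "integral\<^sup>L lborel f \<noteq> 0"
  proof
    assume "integral\<^sup>L lborel f = 0"
    hence ae: "AE x in lborel. f x = 0"
      using integral_nonneg_eq_0_iff_AE[OF i] nn by auto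
    have "AE x in lborel. x \<notin> {0<..<m}"
      using ae by eventually_elim (use p in fastforce)
    hence "emeasure lborel {0<..<m} = 0"
      by (subst (asm) AE_iff_measurable[where N="{0<..<m}"]) auto
    thus False using m by (simp add: emeasure_lborel_Ioo)
  qed
  thus ?thesis using ge by linarith
qed

locale dens2 = dens +
  fixes \<alpha> \<beta> Cl Cu \<eta> :: real
  assumes pos: "\<And>x. 0 < x \<Longrightarrow> x < \<eta> \<Longrightarrow> 0 < \<nu> x" and eta: "0 < \<eta>"
    and ab: "0 < \<alpha>" "\<alpha> \<le> \<beta>" "\<beta> < 2" and Cl: "0 < Cl" and Cu: "0 < Cu"
    and lsc: "\<And>lam \<theta>. 1 \<le> lam \<Longrightarrow> 0 \<le> \<theta> \<Longrightarrow> psi \<nu> (lam*\<theta>) \<ge> Cl * lam powr \<alpha> * psi \<nu> \<theta>"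
    and usc: "\<And>lam \<theta>. 1 \<le> lam \<Longrightarrow> 1 \<le> \<theta> \<Longrightarrow> psi \<nu> (lam*\<theta>) \<le> Cu * lam powr \<beta> * psi \<nu> \<theta>"
begin

lemma psi0: "psi \<nu> 0 = 0" unfolding psi_def by simp

lemma psi_small:
  assumes "0 \<le> \<xi>" "0 \<le> u" "u \<le> 1"
  shows "Cl * psi \<nu> (u*\<xi>) \<le> u powr \<alpha> * psi \<nu> \<xi>"
proof (cases "u = 0")
  case True thus ?thesis by (simp add: psi0)
next
  case False
  hence u: "0 < u" using assms by simp
  have "Cl * (1/u) powr \<alpha> * psi \<nu> (u*\<xi>) \<le> psi \<nu> ((1/u) * (u*\<xi>))"
    using lsc[of "1/u" "u*\<xi>"] u assms by simp
  also have "(1/u) * (u*\<xi>) = \<xi>" using u by simp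
  finally have "Cl * (1/u) powr \<alpha> * psi \<nu> (u*\<xi>) \<le> psi \<nu> \<xi>" .
  hence le: "u powr \<alpha> * (Cl * (1/u) powr \<alpha> * psi \<nu> (u*\<xi>)) \<le> u powr \<alpha> * psi \<nu> \<xi>"
    by (rule mult_left_mono) simp
  moreover have one: "u powr \<alpha> * (1/u) powr \<alpha> = 1" using u by (simp add: powr_divide)
  have "u powr \<alpha> * (Cl * (1/u) powr \<alpha> * psi \<nu> (u*\<xi>)) = (u powr \<alpha> * (1/u) powr \<alpha>) * (Cl * psi \<nu> (u*\<xi>))"
    by (simp add: mult_ac)
  also have "\<dots> = Cl * psi \<nu> (u*\<xi>)" using one by simp
  finally show ?thesis using le by simp
qed

lemma psi_small': "0 \<le> \<xi> \<Longrightarrow> u \<in> {0..1} \<Longrightarrow> psi \<nu> (u*\<xi>) \<le> psi \<nu> \<xi> / Cl"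
proof -
  assume a: "0 \<le> \<xi>" "u \<in> {0..1}"
  have "Cl * psi \<nu> (u*\<xi>) \<le> u powr \<alpha> * psi \<nu> \<xi>" using psi_small a by auto
  also have "\<dots> \<le> 1 * psi \<nu> \<xi>" using a ab by (intro mult_right_mono powr_le1 psi_nonneg) auto
  finally show ?thesis using Cl by (simp add: field_simps)
qed

lemma E2': "0 < \<xi> \<Longrightarrow> Jf \<nu> (\<xi>\<^sup>2) \<le> 15/2 * (psi \<nu> \<xi> / Cl)"
proof (rule E2)
  show "0 \<le> psi \<nu> \<xi> / Cl" using psi_nonneg[of \<xi>] Cl by simp
qed (auto intro: psi_small')

lemma psi1_pos: "0 < psi \<nu> 1"
  unfolding psi_def
proof (rule integral_pos_lborel[where m="min \<eta> 1"])
  show "integrable lborel (\<lambda>x. (1 - cos (1 * x)) * \<nu> x)" by (rule psi_int)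
  show "0 \<le> (1 - cos (1 * x)) * \<nu> x" for x
    by (rule pt_nonneg[where g="\<lambda>x. 1 - cos (1 * x)"]) auto
  show "0 < min \<eta> 1" using eta by simp
  fix x :: real assume x: "0 < x" "x < min \<eta> 1"
  have "cos x < cos 0" using x pi_gt3 by (intro cos_monotone_0_pi) auto
  hence "0 < 1 - cos (1 * x)" by simp
  moreover have "0 < \<nu> x" using pos x by auto
  ultimately show "0 < (1 - cos (1 * x)) * \<nu> x" by simp
qed

lemma J_strict:
  assumes "0 \<le> c" "c < c'"
  shows "Jf \<nu> c < Jf \<nu> c'"
proof -
  have i1: "integrable lborel (\<lambda>x. min (c * x\<^sup>2) 1 * \<nu> x)" using J_int assms by simp
  have i2: "integrable lborel (\<lambda>x. min (c' * x\<^sup>2) 1 * \<nu> x)" using J_int assms by simp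
  have "0 < (LINT x|lborel. (min (c' * x\<^sup>2) 1 - min (c * x\<^sup>2) 1) * \<nu> x)"
  proof (rule integral_pos_lborel[where m="min \<eta> (1/(c'+1))"])
    show "integrable lborel (\<lambda>x. (min (c' * x\<^sup>2) 1 - min (c * x\<^sup>2) 1) * \<nu> x)"
      using Bochner_Integration.integrable_diff[OF i2 i1] by (simp add: left_diff_distrib)
    fix x :: real
    have "c * x\<^sup>2 \<le> c' * x\<^sup>2" using assms by (intro mult_right_mono) auto
    hence "min (c * x\<^sup>2) 1 \<le> min (c' * x\<^sup>2) 1" by (rule min.mono) simp
    thus "0 \<le> (min (c' * x\<^sup>2) 1 - min (c * x\<^sup>2) 1) * \<nu> x"
      by (intro pt_nonneg[where g="\<lambda>x. min (c' * x\<^sup>2) 1 - min (c * x\<^sup>2) 1"]) auto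
  next
    show "0 < min \<eta> (1/(c'+1))" using eta assms by simp
  next
    fix x :: real assume x: "0 < x" "x < min \<eta> (1/(c'+1))"
    have c'0: "0 < c'" using assms by simp
    have "x < 1/(c'+1)" using x by simp
    moreover have "1/(c'+1) \<le> 1" using c'0 by simp
    ultimately have x1: "x \<le> 1" by linarith
    have "x\<^sup>2 \<le> x" using x x1 by (simp add: power2_eq_square mult_le_cancel_right1)
    hence "c' * x\<^sup>2 \<le> c' * x" using c'0 by simp
    also have "c' * x < c' * (1/(c'+1))" using \<open>x < 1/(c'+1)\<close> c'0 by (intro mult_strict_left_mono) auto
    also have "\<dots> < 1" using c'0 by (simp add: field_simps)
    finally have "c' * x\<^sup>2 < 1" .
    moreover have "c * x\<^sup>2 < c' * x\<^sup>2" using assms x by simp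
    ultimately have "0 < min (c' * x\<^sup>2) 1 - min (c * x\<^sup>2) 1" by simp
    moreover have "0 < \<nu> x" using pos x by auto
    ultimately show "0 < (min (c' * x\<^sup>2) 1 - min (c * x\<^sup>2) 1) * \<nu> x" by simp
  qed
  also have "\<dots> = Jf \<nu> c' - Jf \<nu> c"
    unfolding Jf_def using Bochner_Integration.integral_diff[OF i2 i1] by (simp add: left_diff_distrib)
  finally show ?thesis by simp
qed

lemma sqrt_powr: "0 \<le> x \<Longrightarrow> sqrt x powr a = x powr (a/2)"
  by (simp add: powr_half_sqrt[symmetric] powr_powr)

lemma Jscale:
  assumes c: "0 < c" and k: "0 < \<kappa>" "\<kappa> \<le> 1"
  shows "Jf \<nu> (\<kappa> * c) \<le> 15 / Cl\<^sup>2 * \<kappa> powr (\<alpha>/2) * Jf \<nu> c"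
proof -
  define u where "u = sqrt \<kappa>"
  define \<xi> where "\<xi> = sqrt c"
  have u: "0 < u" "u \<le> 1" using k by (auto simp: u_def)
  have xi: "0 < \<xi>" using c by (simp add: \<xi>_def)
  have sq: "(u * \<xi>)\<^sup>2 = \<kappa> * c" using k c by (simp add: u_def \<xi>_def power_mult_distrib)
  have a: "Jf \<nu> (\<kappa> * c) \<le> 15/2 * (psi \<nu> (u * \<xi>) / Cl)"
    using E2'[of "u * \<xi>"] u xi sq by simp
  have b: "psi \<nu> (u * \<xi>) \<le> u powr \<alpha> * psi \<nu> \<xi> / Cl"
    using psi_small[of \<xi> u] u xi Cl by (simp add: field_simps)
  have cc: "psi \<nu> \<xi> \<le> 2 * Jf \<nu> c" using E1[of \<xi>] c by (simp add: \<xi>_def)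
  have "u powr \<alpha> * psi \<nu> \<xi> \<le> u powr \<alpha> * (2 * Jf \<nu> c)" using cc by (intro mult_left_mono) auto
  hence "psi \<nu> (u * \<xi>) \<le> u powr \<alpha> * (2 * Jf \<nu> c) / Cl" using b Cl
    by (meson divide_right_mono less_imp_le order_trans)
  hence "15/2 * (psi \<nu> (u * \<xi>) / Cl) \<le> 15/2 * ((u powr \<alpha> * (2 * Jf \<nu> c) / Cl) / Cl)"
    using Cl by (intro mult_left_mono divide_right_mono) auto
  also have "\<dots> = 15 / Cl\<^sup>2 * u powr \<alpha> * Jf \<nu> c" using Cl by (simp add: field_simps power2_eq_square)
  also have "u powr \<alpha> = \<kappa> powr (\<alpha>/2)" using k by (simp add: u_def sqrt_powr)
  finally show ?thesis using a by simp
qed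

lemma Jup:
  assumes c: "1 \<le> c"
  shows "Jf \<nu> c \<le> 15/(2*Cl) * Cu * psi \<nu> 1 * c powr (\<beta>/2)"
proof -
  define \<xi> where "\<xi> = sqrt c"
  have xi: "1 \<le> \<xi>" using c by (simp add: \<xi>_def)
  have a: "Jf \<nu> c \<le> 15/2 * (psi \<nu> \<xi> / Cl)" using E2'[of \<xi>] xi c by (simp add: \<xi>_def)
  have b: "psi \<nu> \<xi> \<le> Cu * \<xi> powr \<beta> * psi \<nu> 1" using usc[of \<xi> 1] xi by simp
  have "15/2 * (psi \<nu> \<xi> / Cl) \<le> 15/2 * ((Cu * \<xi> powr \<beta> * psi \<nu> 1) / Cl)"
    using b Cl by (intro mult_left_mono divide_right_mono) auto
  also have "\<dots> = 15/(2*Cl) * Cu * psi \<nu> 1 * \<xi> powr \<beta>" by simp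
  also have "\<xi> powr \<beta> = c powr (\<beta>/2)" using c by (simp add: \<xi>_def sqrt_powr)
  finally show ?thesis using a by simp
qed

lemma Jlow:
  assumes c: "1 \<le> c"
  shows "Cl * psi \<nu> 1 / 2 * c powr (\<alpha>/2) \<le> Jf \<nu> c"
proof -
  define \<xi> where "\<xi> = sqrt c"
  have xi: "1 \<le> \<xi>" using c by (simp add: \<xi>_def)
  have a: "psi \<nu> \<xi> \<le> 2 * Jf \<nu> c" using E1[of \<xi>] c by (simp add: \<xi>_def)
  have b: "Cl * \<xi> powr \<alpha> * psi \<nu> 1 \<le> psi \<nu> \<xi>" using lsc[of \<xi> 1] xi by simp
  have "\<xi> powr \<alpha> = c powr (\<alpha>/2)" using c by (simp add: \<xi>_def sqrt_powr)
  hence "Cl * c powr (\<alpha>/2) * psi \<nu> 1 \<le> 2 * Jf \<nu> c" using a b by simp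
  moreover have "Cl * psi \<nu> 1 / 2 * c powr (\<alpha>/2) = (Cl * c powr (\<alpha>/2) * psi \<nu> 1) / 2" by simp
  ultimately show ?thesis by linarith
qed

lemma J_cont: "continuous_on {0<..} (Jf \<nu>)"
proof (rule continuous_at_imp_continuous_on, safe)
  fix c0 :: real assume c0: "0 < c0"
  have ev: "eventually (\<lambda>c. 0 < c) (at c0)"
    using order_tendstoD(1)[OF tendsto_ident_at c0] .
  have up: "((\<lambda>c. max (c/c0) 1 * Jf \<nu> c0) \<longlongrightarrow> max (c0/c0) 1 * Jf \<nu> c0) (at c0)"
    using c0 by (intro tendsto_intros) auto
  have lo: "((\<lambda>c. Jf \<nu> c0 / max (c0/c) 1) \<longlongrightarrow> Jf \<nu> c0 / max (c0/c0) 1) (at c0)"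
    using c0 by (intro tendsto_intros) auto
  have "((Jf \<nu>) \<longlongrightarrow> Jf \<nu> c0) (at c0)"
  proof (rule tendsto_sandwich[OF _ _ lo[simplified] up[simplified]])
    show "eventually (\<lambda>c. Jf \<nu> c0 / max (c0/c) 1 \<le> Jf \<nu> c) (at c0)"
      using ev
    proof eventually_elim
      case (elim c)
      have "Jf \<nu> c0 \<le> max (c0/c) 1 * Jf \<nu> c" using J_le_max[of c0 c] c0 elim by simp
      moreover have "0 < max (c0/c) 1" by simp
      ultimately show ?case by (simp add: divide_le_eq mult.commute)
    qed
    show "eventually (\<lambda>c. Jf \<nu> c \<le> max (c/c0) 1 * Jf \<nu> c0) (at c0)"
      using ev by eventually_elim (use J_le_max c0 in auto)
  qed
  thus "isCont (Jf \<nu>) c0" by (simp add: isCont_def)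
qed

lemma J_surj:
  assumes y: "0 < y"
  shows "\<exists>c>0. Jf \<nu> c = y"
proof -
  define P1 where "P1 = psi \<nu> 1"
  have P1: "0 < P1" using psi1_pos by (simp add: P1_def)
  define chi where "chi = max 1 ((2*y/(Cl*P1)) powr (2/\<alpha>))"
  have chi: "1 \<le> chi" by (simp add: chi_def)
  have "2*y/(Cl*P1) = ((2*y/(Cl*P1)) powr (2/\<alpha>)) powr (\<alpha>/2)"
    using y P1 Cl ab by (simp add: powr_powr)
  also have "\<dots> \<le> chi powr (\<alpha>/2)" using ab by (intro powr_mono2) (auto simp: chi_def)
  finally have "Cl * P1 / 2 * (2*y/(Cl*P1)) \<le> Cl * P1 / 2 * chi powr (\<alpha>/2)"
    using Cl P1 by (intro mult_left_mono) auto
  hence hi: "y \<le> Jf \<nu> chi" using Jlow[OF chi] Cl P1 by (simp add: P1_def)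
  define J1 where "J1 = Jf \<nu> 1"
  have J1: "0 \<le> J1" using J_nonneg by (simp add: J1_def)
  define kap where "kap = min 1 ((y * Cl\<^sup>2 / (15 * (J1 + 1))) powr (2/\<alpha>))"
  have kap: "0 < kap" "kap \<le> 1" using y Cl J1 by (auto simp: kap_def)
  have A: "Jf \<nu> kap \<le> 15 / Cl\<^sup>2 * kap powr (\<alpha>/2) * J1"
    using Jscale[of 1 kap] kap by (simp add: J1_def)
  have "kap powr (\<alpha>/2) \<le> ((y * Cl\<^sup>2 / (15 * (J1 + 1))) powr (2/\<alpha>)) powr (\<alpha>/2)"
    using ab kap by (intro powr_mono2) (auto simp: kap_def)
  also have "\<dots> = y * Cl\<^sup>2 / (15 * (J1 + 1))" using y Cl J1 ab by (simp add: powr_powr)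
  finally have B: "kap powr (\<alpha>/2) \<le> y * Cl\<^sup>2 / (15 * (J1 + 1))" .
  have "15 / Cl\<^sup>2 * kap powr (\<alpha>/2) * J1 \<le> 15 / Cl\<^sup>2 * (y * Cl\<^sup>2 / (15 * (J1 + 1))) * J1"
    using B Cl J1 by (intro mult_right_mono mult_left_mono) auto
  also have "\<dots> = y * (J1 / (J1 + 1))" using Cl J1 by (simp add: field_simps)
  also have "\<dots> \<le> y * 1" using y J1 by (intro mult_left_mono) auto
  finally have "15 / Cl\<^sup>2 * kap powr (\<alpha>/2) * J1 \<le> y" by simp
  hence lo: "Jf \<nu> kap \<le> y" using A by linarith
  have "continuous_on {kap..chi} (Jf \<nu>)"
    by (rule continuous_on_subset[OF J_cont]) (use kap in auto)
  then obtain c where "kap \<le> c" "c \<le> chi" "Jf \<nu> c = y"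
    using IVT'[of "Jf \<nu>" kap y chi] lo hi kap chi by auto
  thus ?thesis using kap by (intro exI[of _ c]) auto
qed

lemma hinv_prop:
  assumes y: "0 < y"
  shows "0 < hinv \<nu> y \<and> hfun \<nu> (hinv \<nu> y) = y"
  unfolding hinv_def
proof (rule theI')
  obtain c where c: "0 < c" "Jf \<nu> c = y" using J_surj[OF y] by auto
  have ex: "0 < 1/sqrt c \<and> hfun \<nu> (1/sqrt c) = y"
    using c by (simp add: hfun_eq power_divide)
  show "\<exists>!r. 0 < r \<and> hfun \<nu> r = y"
  proof (rule ex1I[of _ "1/sqrt c"])
    show "0 < 1/sqrt c \<and> hfun \<nu> (1/sqrt c) = y" by (rule ex)
    fix r assume r: "0 < r \<and> hfun \<nu> r = y"
    have "hfun \<nu> r = Jf \<nu> (1/r\<^sup>2)" using r by (intro hfun_eq) simp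
    hence "Jf \<nu> (1/r\<^sup>2) = Jf \<nu> c" using r c by simp
    hence "1/r\<^sup>2 = c"
      using J_strict[of "1/r\<^sup>2" c] J_strict[of c "1/r\<^sup>2"] c r
      by (metis linorder_neqE_linordered_idom less_imp_le order_less_irrefl zero_le_divide_1_iff zero_le_power2)
    hence "r\<^sup>2 = 1/c" using r c by (simp add: field_simps)
    hence "r = sqrt (1/c)" using r by (metis less_imp_le real_sqrt_unique)
    thus "r = 1/sqrt c" by (simp add: real_sqrt_divide)
  qed
qed

lemma J_up: assumes "0 < c" "1 \<le> \<kappa>" shows "Jf \<nu> (\<kappa> * c) \<le> \<kappa> * Jf \<nu> c"
  using J_le_max[of "\<kappa> * c" c] assms by (simp add: max_def)

lemma inv_sq_powr: fixes r q :: real shows "0 < r \<Longrightarrow> (1/r\<^sup>2) powr q = r powr (-2*q)"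
proof -
  assume r: "0 < r"
  have "1/r\<^sup>2 = r powr (-2)" using r by (simp add: powr_minus_divide powr_numeral)
  thus ?thesis by (simp add: powr_powr)
qed

end

definition good :: "(real\<Rightarrow>real) \<Rightarrow> real \<Rightarrow> real \<Rightarrow> real \<Rightarrow> real \<Rightarrow> real \<Rightarrow> bool" where
 "good \<nu> \<alpha> \<beta> \<tau> R G \<longleftrightarrow> 1 \<le> G \<and>
   (\<forall>t. 0 < t \<and> t \<le> \<tau> \<longrightarrow> 0 < hinv \<nu> (1/t) \<and> Jf \<nu> (1/(hinv \<nu> (1/t))\<^sup>2) = 1/t
        \<and> t powr (1/\<alpha>) / G \<le> hinv \<nu> (1/t)
        \<and> (hinv \<nu> (1/t) \<le> 1/2 \<longrightarrow> hinv \<nu> (1/t) \<le> G * t powr (1/\<beta>))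
        \<and> (1/2 < hinv \<nu> (1/t) \<longrightarrow> 1/G \<le> t)) \<and>
   (\<forall>c \<kappa>. 0 < c \<and> 0 < \<kappa> \<and> \<kappa> \<le> 1 \<longrightarrow> Jf \<nu> (\<kappa>*c) \<le> G * \<kappa> powr (\<alpha>/2) * Jf \<nu> c) \<and>
   (\<forall>c \<kappa>. 0 < c \<and> 1 \<le> \<kappa> \<longrightarrow> Jf \<nu> (\<kappa>*c) \<le> \<kappa> * Jf \<nu> c) \<and>
   (\<forall>c. 0 \<le> c \<longrightarrow> Hr \<nu> R c \<le> G * c powr (\<beta>/2) \<and> Hr \<nu> R c \<le> G * c \<and> Hr \<nu> R c \<le> Jf \<nu> c) \<and>
   (\<forall>c. 0 \<le> c \<longrightarrow> 0 \<le> Jf \<nu> c \<and> 0 \<le> Hr \<nu> R c)"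

context dens2 begin

lemma good_ex:
  assumes tau: "0 < \<tau>" and R: "R \<le> 1"
  shows "\<exists>G0. \<forall>G\<ge>G0. good \<nu> \<alpha> \<beta> \<tau> R G"
proof -
  define P1 where "P1 = psi \<nu> 1"
  have P1: "0 < P1" using psi1_pos by (simp add: P1_def)
  define b where "b = Cl * P1 / 2"
  have b: "0 < b" using Cl P1 by (simp add: b_def)
  define B where "B = 15/(2*Cl) * Cu * P1"
  have B: "0 < B" using Cl Cu P1 by (simp add: B_def)
  define M where "M = Jf \<nu> 1"
  have M: "0 \<le> M" using J_nonneg by (simp add: M_def)
  define J4 where "J4 = Jf \<nu> 4"
  have J4: "0 < J4" using J_strict[of 0 4] J_nonneg[of 0] by (simp add: J4_def)
  define G0 where "G0 = 1 + b powr (-1/\<alpha>) + \<tau> powr (1/\<alpha>) + 15/Cl\<^sup>2 + B powr (1/\<beta>) + J4 + B + M"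
  have G0: "1 \<le> G0" "b powr (-1/\<alpha>) \<le> G0" "\<tau> powr (1/\<alpha>) \<le> G0" "15/Cl\<^sup>2 \<le> G0"
     "B powr (1/\<beta>) \<le> G0" "J4 \<le> G0" "B \<le> G0" "M \<le> G0"
    unfolding G0_def using J4 B M Cl by auto
  show ?thesis
  proof (intro exI allI impI)
    fix G assume GG: "G0 \<le> G"
    have G1: "1 \<le> G" using G0 GG by simp
    have tpart: "0 < hinv \<nu> (1/t) \<and> Jf \<nu> (1/(hinv \<nu> (1/t))\<^sup>2) = 1/t
        \<and> t powr (1/\<alpha>) / G \<le> hinv \<nu> (1/t)
        \<and> (hinv \<nu> (1/t) \<le> 1/2 \<longrightarrow> hinv \<nu> (1/t) \<le> G * t powr (1/\<beta>))
        \<and> (1/2 < hinv \<nu> (1/t) \<longrightarrow> 1/G \<le> t)" if t: "0 < t" "t \<le> \<tau>" for t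
    proof -
      define r where "r = hinv \<nu> (1/t)"
      have hp: "0 < r \<and> hfun \<nu> r = 1/t" using hinv_prop[of "1/t"] t by (simp add: r_def)
      hence r: "0 < r" by simp
      have Jr: "Jf \<nu> (1/r\<^sup>2) = 1/t" using hp hfun_eq[of r] by simp
      have low: "t powr (1/\<alpha>) / G \<le> r"
      proof (cases "r \<le> 1")
        case True
        have c1: "1 \<le> 1/r\<^sup>2" using r True by (simp add: field_simps power_le_one)
        have "b * (1/r\<^sup>2) powr (\<alpha>/2) \<le> 1/t" using Jlow[OF c1] Jr by (simp add: b_def P1_def)
        moreover have "(1/r\<^sup>2) powr (\<alpha>/2) = 1 / r powr \<alpha>"
          using r by (simp add: inv_sq_powr powr_minus_divide)
        ultimately have "b / r powr \<alpha> \<le> 1/t" by simp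
        hence "b * t \<le> r powr \<alpha>" using r t by (simp add: field_simps)
        hence "(b * t) powr (1/\<alpha>) \<le> (r powr \<alpha>) powr (1/\<alpha>)"
          using b t ab by (intro powr_mono2) auto
        also have "\<dots> = r" using r ab by (simp add: powr_powr)
        finally have rb: "b powr (1/\<alpha>) * t powr (1/\<alpha>) \<le> r" by (simp add: powr_mult)
        have "t powr (1/\<alpha>) / G \<le> t powr (1/\<alpha>) / b powr (-1/\<alpha>)"
          using G0 GG b by (intro divide_left_mono) auto
        also have "\<dots> = b powr (1/\<alpha>) * t powr (1/\<alpha>)"
          using b by (simp add: powr_minus_divide[of b "1/\<alpha>", simplified] field_simps)
        finally show ?thesis using rb by simp
      next
        case False
        have "t powr (1/\<alpha>) \<le> \<tau> powr (1/\<alpha>)" using t ab by (intro powr_mono2) auto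
        also have "\<dots> \<le> G" using G0 GG by simp
        finally have "t powr (1/\<alpha>) / G \<le> 1" using G1 by simp
        thus ?thesis using False by simp
      qed
      have up: "r \<le> G * t powr (1/\<beta>)" if rh: "r \<le> 1/2"
      proof -
        have c1: "1 \<le> 1/r\<^sup>2" using r rh by (simp add: field_simps power_le_one)
        have "1/t \<le> B * (1/r\<^sup>2) powr (\<beta>/2)" using Jup[OF c1] Jr by (simp add: B_def P1_def)
        moreover have "(1/r\<^sup>2) powr (\<beta>/2) = 1 / r powr \<beta>"
          using r by (simp add: inv_sq_powr powr_minus_divide)
        ultimately have "1/t \<le> B / r powr \<beta>" by simp
        hence "r powr \<beta> \<le> B * t" using r t by (simp add: field_simps)
        hence "(r powr \<beta>) powr (1/\<beta>) \<le> (B * t) powr (1/\<beta>)"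
          using r ab by (intro powr_mono2) auto
        moreover have "(r powr \<beta>) powr (1/\<beta>) = r" using r ab by (simp add: powr_powr)
        ultimately have "r \<le> B powr (1/\<beta>) * t powr (1/\<beta>)" by (simp add: powr_mult)
        also have "\<dots> \<le> G * t powr (1/\<beta>)" using G0 GG by (intro mult_right_mono) auto
        finally show ?thesis .
      qed
      have big: "1/G \<le> t" if rh: "1/2 < r"
      proof -
        have "1/r\<^sup>2 \<le> 4"
        proof -
          have "(1/2)^2 \<le> r^2" using rh by (intro power_mono) auto
          thus ?thesis using r by (simp add: field_simps)
        qed
        hence "1/t \<le> J4" using J_mono[of "1/r\<^sup>2" 4] Jr by (simp add: J4_def)
        hence "1/J4 \<le> t" using t J4 by (simp add: field_simps)
        moreover have "1/G \<le> 1/J4" using G0 GG J4 by (intro divide_left_mono) auto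
        ultimately show ?thesis by simp
      qed
      show ?thesis using r Jr low up big by (simp add: r_def)
    qed
    have p2: "Jf \<nu> (\<kappa>*c) \<le> G * \<kappa> powr (\<alpha>/2) * Jf \<nu> c" if "0 < c" "0 < \<kappa>" "\<kappa> \<le> 1" for c \<kappa>
    proof -
      have "Jf \<nu> (\<kappa>*c) \<le> 15/Cl\<^sup>2 * \<kappa> powr (\<alpha>/2) * Jf \<nu> c" using Jscale that by simp
      also have "\<dots> \<le> G * \<kappa> powr (\<alpha>/2) * Jf \<nu> c"
        using G0 GG that J_nonneg[of c] by (intro mult_right_mono) auto
      finally show ?thesis .
    qed
    have p4: "Hr \<nu> R c \<le> G * c powr (\<beta>/2) \<and> Hr \<nu> R c \<le> G * c \<and> Hr \<nu> R c \<le> Jf \<nu> c" if c: "0 \<le> c" for c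
    proof -
      have lin: "Hr \<nu> R c \<le> c * M" using Hr_le_lin[OF c R] by (simp add: M_def)
      also have "\<dots> \<le> G * c"
      proof -
        have "M \<le> G" using G0 GG by linarith
        thus ?thesis using c by (simp add: mult.commute mult_right_mono)
      qed
      finally have l2: "Hr \<nu> R c \<le> G * c" .
      have l1: "Hr \<nu> R c \<le> G * c powr (\<beta>/2)"
      proof (cases "1 \<le> c")
        case True
        have "Hr \<nu> R c \<le> Jf \<nu> c" using Hr_le_J c by simp
        also have "\<dots> \<le> B * c powr (\<beta>/2)" using Jup[OF True] by (simp add: B_def P1_def)
        also have "\<dots> \<le> G * c powr (\<beta>/2)" using G0 GG by (intro mult_right_mono) auto
        finally show ?thesis .
      next
        case False
        have "c = c powr 1" using c by (simp add: powr_one)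
        also have "\<dots> \<le> c powr (\<beta>/2)" using ab c False by (intro powr_mono') auto
        finally have "c \<le> c powr (\<beta>/2)" .
        hence "c * M \<le> c powr (\<beta>/2) * G" using M G0 GG by (intro mult_mono) auto
        thus ?thesis using lin by (simp add: mult.commute)
      qed
      show ?thesis using l1 l2 Hr_le_J c by simp
    qed
    show "good \<nu> \<alpha> \<beta> \<tau> R G"
      unfolding good_def using G1 tpart p2 p4 J_up J_nonneg Hr_nonneg by auto
  qed
qed

end

lemma min_add: fixes A B :: real shows "0 \<le> A \<Longrightarrow> 0 \<le> B \<Longrightarrow> min (A+B) 1 \<le> min A 1 + min B 1"
  by (simp add: min_def)

lemma min_sq: fixes X :: real shows "0 \<le> X \<Longrightarrow> min (X\<^sup>2) 1 \<le> min X 1"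
proof -
  assume X: "0 \<le> X"
  show ?thesis
  proof (cases "X \<le> 1")
    case True
    hence "X * X \<le> X * 1" using X by (intro mult_left_mono) auto
    thus ?thesis using True by (simp add: power2_eq_square min_def)
  next
    case False thus ?thesis by (simp add: min_def)
  qed
qed

lemma min_cube: fixes X :: real shows "0 \<le> X \<Longrightarrow> min (X^3) 1 \<le> min (X\<^sup>2) 1"
proof -
  assume X: "0 \<le> X"
  show ?thesis
  proof (cases "X \<le> 1")
    case True
    hence "X\<^sup>2 * X \<le> X\<^sup>2 * 1" using X by (intro mult_left_mono) auto
    moreover have "X^3 = X\<^sup>2 * X" by (simp add: power_def numeral_eq_Suc)
    ultimately have "X^3 \<le> X\<^sup>2" by simp
    thus ?thesis by (simp add: min_def)
  next
    case False
    hence "1 \<le> X\<^sup>2" using X by (simp add: one_le_power)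
    thus ?thesis by (simp add: min_def)
  qed
qed

lemma split_sq:
  fixes a w p :: real assumes p: "0 < p"
  shows "min (((\<bar>a\<bar> + \<bar>w\<bar>)\<^sup>2 * \<bar>w\<bar>\<^sup>2) / p) 1 \<le> min ((2*a\<^sup>2/p) * w\<^sup>2) 1 + min (sqrt (2/p) * w\<^sup>2) 1"
proof -
  have "(\<bar>a\<bar> + \<bar>w\<bar>)\<^sup>2 \<le> 2*a\<^sup>2 + 2*w\<^sup>2"
    using sum_squares_ge_zero[of "\<bar>a\<bar> - \<bar>w\<bar>" 0] by (simp add: power2_eq_square algebra_simps) 
  hence "(\<bar>a\<bar> + \<bar>w\<bar>)\<^sup>2 * w\<^sup>2 \<le> (2*a\<^sup>2 + 2*w\<^sup>2) * w\<^sup>2"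
    by (rule mult_right_mono) simp
  hence "(\<bar>a\<bar> + \<bar>w\<bar>)\<^sup>2 * \<bar>w\<bar>\<^sup>2 \<le> (2*a\<^sup>2 + 2*w\<^sup>2) * w\<^sup>2" by simp
  hence "((\<bar>a\<bar> + \<bar>w\<bar>)\<^sup>2 * \<bar>w\<bar>\<^sup>2) / p \<le> (2*a\<^sup>2 + 2*w\<^sup>2) * w\<^sup>2 / p"
    using p by (intro divide_right_mono) auto
  also have "\<dots> = (2*a\<^sup>2/p) * w\<^sup>2 + (sqrt (2/p) * w\<^sup>2)\<^sup>2"
    using p by (simp add: power_mult_distrib field_simps power2_eq_square)
  finally have le: "((\<bar>a\<bar> + \<bar>w\<bar>)\<^sup>2 * \<bar>w\<bar>\<^sup>2) / p \<le> (2*a\<^sup>2/p) * w\<^sup>2 + (sqrt (2/p) * w\<^sup>2)\<^sup>2" .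
  have "min (((\<bar>a\<bar> + \<bar>w\<bar>)\<^sup>2 * \<bar>w\<bar>\<^sup>2) / p) 1 \<le> min ((2*a\<^sup>2/p) * w\<^sup>2 + (sqrt (2/p) * w\<^sup>2)\<^sup>2) 1"
    using le by (rule min.mono) simp
  also have "\<dots> \<le> min ((2*a\<^sup>2/p) * w\<^sup>2) 1 + min ((sqrt (2/p) * w\<^sup>2)\<^sup>2) 1"
    using p by (intro min_add) auto
  also have "min ((sqrt (2/p) * w\<^sup>2)\<^sup>2) 1 \<le> min (sqrt (2/p) * w\<^sup>2) 1"
    using p by (intro min_sq) auto
  finally show ?thesis by simp
qed

lemma split_cube:
  fixes a w q s :: real assumes s: "0 < s" and q: "q = s^3"
  shows "min (((\<bar>a\<bar> + \<bar>w\<bar>) * \<bar>w\<bar>\<^sup>2) / q) 1 \<le> min ((\<bar>a\<bar>/q) * w\<^sup>2) 1 + min ((1/s\<^sup>2) * w\<^sup>2) 1"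
proof -
  have eq: "((\<bar>a\<bar> + \<bar>w\<bar>) * \<bar>w\<bar>\<^sup>2) / q = (\<bar>a\<bar>/q) * w\<^sup>2 + (\<bar>w\<bar>/s)^3"
    using s q by (simp add: field_simps power_def numeral_eq_Suc)
  have "min (((\<bar>a\<bar> + \<bar>w\<bar>) * \<bar>w\<bar>\<^sup>2) / q) 1 \<le> min ((\<bar>a\<bar>/q) * w\<^sup>2) 1 + min ((\<bar>w\<bar>/s)^3) 1"
    unfolding eq using s q by (intro min_add) auto
  also have "min ((\<bar>w\<bar>/s)^3) 1 \<le> min ((\<bar>w\<bar>/s)\<^sup>2) 1" using s by (intro min_cube) auto
  also have "(\<bar>w\<bar>/s)\<^sup>2 = (1/s\<^sup>2) * w\<^sup>2" by (simp add: power_divide)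
  finally show ?thesis by simp
qed

context dens begin

lemma split_bound:
  assumes mu: "\<And>w. w \<noteq> 0 \<Longrightarrow> \<mu> w \<le> \<nu> w * indicator {x. \<bar>x\<bar> < R} w"
    and F0: "\<And>w. 0 \<le> F w" and F00: "F 0 = 0"
    and spl: "\<And>w. w \<noteq> 0 \<Longrightarrow> min (F w) 1 \<le> min (c1 * w\<^sup>2) 1 + min (c2 * w\<^sup>2) 1"
    and c: "0 \<le> c1" "0 \<le> c2"
  shows "(LINT w|lborel. min (F w) 1 * \<mu> w) \<le> Hr \<nu> R c1 + Hr \<nu> R c2"
proof -
  define g where "g w = (min (c1 * w\<^sup>2) 1 * indicator {x. \<bar>x\<bar> < R} w) * \<nu> w + (min (c2 * w\<^sup>2) 1 * indicator {x. \<bar>x\<bar> < R} w) * \<nu> w" for w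
  have i1: "integrable lborel (\<lambda>w. (min (c1 * w\<^sup>2) 1 * indicator {x. \<bar>x\<bar> < R} w) * \<nu> w)" using Hr_int c by simp
  have i2: "integrable lborel (\<lambda>w. (min (c2 * w\<^sup>2) 1 * indicator {x. \<bar>x\<bar> < R} w) * \<nu> w)" using Hr_int c by simp
  have ig: "integrable lborel g" unfolding g_def using i1 i2 by simp
  have gnn: "0 \<le> g w" for w
  proof -
    have "0 \<le> (min (c1 * w\<^sup>2) 1 * indicator {x. \<bar>x\<bar> < R} w) * \<nu> w"
      by (rule pt_nonneg[where g="\<lambda>w. min (c1 * w\<^sup>2) 1 * indicator {x. \<bar>x\<bar> < R} w"]) (use c in auto)
    moreover have "0 \<le> (min (c2 * w\<^sup>2) 1 * indicator {x. \<bar>x\<bar> < R} w) * \<nu> w"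
      by (rule pt_nonneg[where g="\<lambda>w. min (c2 * w\<^sup>2) 1 * indicator {x. \<bar>x\<bar> < R} w"]) (use c in auto)
    ultimately show ?thesis by (simp add: g_def)
  qed
  have pt: "min (F w) 1 * \<mu> w \<le> g w" for w
  proof (cases "w = 0")
    case True thus ?thesis using F00 gnn[of 0] by simp
  next
    case False
    have mF: "0 \<le> min (F w) 1" using F0[of w] by simp
    have nw: "0 \<le> \<nu> w" using nn False by simp
    show ?thesis
    proof (cases "\<bar>w\<bar> < R")
      case True
      have "min (F w) 1 * \<mu> w \<le> min (F w) 1 * \<nu> w"
        using mu[OF False] True mF by (intro mult_left_mono) auto
      also have "\<dots> \<le> (min (c1 * w\<^sup>2) 1 + min (c2 * w\<^sup>2) 1) * \<nu> w"
        using spl[OF False] nw by (rule mult_right_mono)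
      also have "\<dots> = g w" using True by (simp add: g_def algebra_simps)
      finally show ?thesis .
    next
      case False2: False
      have "\<mu> w \<le> 0" using mu[OF False] False2 by simp
      hence "min (F w) 1 * \<mu> w \<le> 0" using mF by (simp add: mult_nonneg_nonpos)
      also have "0 \<le> g w" by (rule gnn)
      finally show ?thesis .
    qed
  qed
  have "(LINT w|lborel. min (F w) 1 * \<mu> w) \<le> integral\<^sup>L lborel g"
    by (rule integral_mono_AE'[OF ig]) (auto intro: pt gnn)
  also have "integral\<^sup>L lborel g = Hr \<nu> R c1 + Hr \<nu> R c2"
    unfolding g_def Hr_def by (rule Bochner_Integration.integral_add[OF i1 i2])
  finally show ?thesis .
qed

end

lemma pw_le_self: fixes x p :: real shows "1 \<le> x \<Longrightarrow> p \<le> 1 \<Longrightarrow> x powr p \<le> x"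
  using powr_mono[of p 1 x] by simp

lemma pw_le_sq: fixes x p :: real shows "1 \<le> x \<Longrightarrow> p \<le> 2 \<Longrightarrow> x powr p \<le> x\<^sup>2"
  using powr_mono[of p 2 x] by simp

lemma pw_ge_self: fixes x p :: real shows "0 \<le> x \<Longrightarrow> x \<le> 1 \<Longrightarrow> p \<le> 1 \<Longrightarrow> x \<le> x powr p"
  using powr_mono'[of p 1 x] by simp

lemma sq_powr: fixes a q :: real shows "(a\<^sup>2) powr q = \<bar>a\<bar> powr (2*q)"
proof -
  have "a\<^sup>2 = \<bar>a\<bar> powr 2" by simp
  hence "(a\<^sup>2) powr q = (\<bar>a\<bar> powr 2) powr q" by simp
  also have "\<dots> = \<bar>a\<bar> powr (2*q)" by (rule powr_powr)
  finally show ?thesis .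
qed

lemma term1_lemma:
  fixes \<nu> :: "real \<Rightarrow> real"
  assumes G: "1 \<le> G" and c: "0 < c" and k: "0 \<le> \<kappa>"
    and sc: "\<forall>c \<kappa>. 0 < c \<and> 0 < \<kappa> \<and> \<kappa> \<le> 1 \<longrightarrow> Jf \<nu> (\<kappa>*c) \<le> G * \<kappa> powr (\<alpha>/2) * Jf \<nu> c"
    and up: "\<forall>c \<kappa>. 0 < c \<and> 1 \<le> \<kappa> \<longrightarrow> Jf \<nu> (\<kappa>*c) \<le> \<kappa> * Jf \<nu> c"
    and hr: "\<forall>c. 0 \<le> c \<longrightarrow> Hr \<nu> R c \<le> G * c powr (\<beta>/2) \<and> Hr \<nu> R c \<le> G * c \<and> Hr \<nu> R c \<le> Jf \<nu> c"
    and Jc: "0 \<le> Jf \<nu> c"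
  shows "Hr \<nu> R (\<kappa> * c) \<le> (G * \<kappa> powr (\<alpha>/2) + \<kappa>) * Jf \<nu> c"
proof (cases "\<kappa> = 0")
  case True
  thus ?thesis using hr by auto
next
  case False
  hence k0: "0 < \<kappa>" using k by simp
  have "Hr \<nu> R (\<kappa> * c) \<le> Jf \<nu> (\<kappa> * c)" using hr k c by simp
  also have "\<dots> \<le> (G * \<kappa> powr (\<alpha>/2) + \<kappa>) * Jf \<nu> c"
  proof (cases "\<kappa> \<le> 1")
    case True
    hence "Jf \<nu> (\<kappa> * c) \<le> G * \<kappa> powr (\<alpha>/2) * Jf \<nu> c" using sc k0 c by simp
    moreover have "0 \<le> \<kappa> * Jf \<nu> c" using k Jc by simp
    ultimately show ?thesis by (simp add: distrib_right)
  next
    case False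
    hence "Jf \<nu> (\<kappa> * c) \<le> \<kappa> * Jf \<nu> c" using up c by simp
    moreover have "0 \<le> G * \<kappa> powr (\<alpha>/2) * Jf \<nu> c" using G Jc by simp
    ultimately show ?thesis by (simp add: distrib_right)
  qed
  finally show ?thesis .
qed

lemma combine3:
  fixes A B T K1 K2 K3 K t :: real
  assumes "0 \<le> A" "0 \<le> B" "0 \<le> T" "0 < t" "K1 \<le> K" "K2 \<le> K" "K3 \<le> K"
  shows "(K1 * A + K2 * B + K3 * T) / t \<le> K * (T + A + B) / t"
proof -
  have "K1 * A \<le> K * A" "K2 * B \<le> K * B" "K3 * T \<le> K * T"
    using assms by (auto intro: mult_right_mono)
  hence "K1 * A + K2 * B + K3 * T \<le> K * (T + A + B)" by (simp add: algebra_simps)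
  thus ?thesis using assms by (intro divide_right_mono) auto
qed

lemma tgam_low:
  fixes t G g :: real
  assumes "0 < t" "1/G \<le> t" "1 \<le> G" "0 \<le> g" "g \<le> 1"
  shows "1/G \<le> t powr g"
proof (cases "t \<le> 1")
  case True
  hence "t \<le> t powr g" using assms by (intro pw_ge_self) auto
  thus ?thesis using assms by simp
next
  case False
  hence "1 \<le> t powr g" using assms by (intro ge_one_powr_ge_zero) auto
  moreover have "1/G \<le> 1" using assms by simp
  ultimately show ?thesis by simp
qed

lemma ineq1_alg:
  fixes \<nu> :: "real \<Rightarrow> real"
  assumes G: "1 \<le> G" and ab: "0 < \<alpha>" "\<alpha> \<le> \<beta>" "\<beta> < 2" and t: "0 < t" "t \<le> \<tau>"
    and r: "0 < r" "Jf \<nu> (1/r\<^sup>2) = 1/t" "r \<le> 1/2 \<longrightarrow> r \<le> G * t powr (1/\<beta>)" "1/2 < r \<longrightarrow> 1/G \<le> t"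
    and sc: "\<forall>c \<kappa>. 0 < c \<and> 0 < \<kappa> \<and> \<kappa> \<le> 1 \<longrightarrow> Jf \<nu> (\<kappa>*c) \<le> G * \<kappa> powr (\<alpha>/2) * Jf \<nu> c"
    and up: "\<forall>c \<kappa>. 0 < c \<and> 1 \<le> \<kappa> \<longrightarrow> Jf \<nu> (\<kappa>*c) \<le> \<kappa> * Jf \<nu> c"
    and hr: "\<forall>c. 0 \<le> c \<longrightarrow> Hr \<nu> R c \<le> G * c powr (\<beta>/2) \<and> Hr \<nu> R c \<le> G * c \<and> Hr \<nu> R c \<le> Jf \<nu> c"
    and L: "L \<le> Hr \<nu> R (2*a\<^sup>2/r\<^sup>2) + Hr \<nu> R (sqrt (2/r\<^sup>2))"
  shows "L \<le> (2*G + 2 + 2*G\<^sup>2 + 4*G\<^sup>2*\<tau>) * (t powr (\<alpha>/(2*\<beta>)) + \<bar>a\<bar> powr \<alpha> + \<bar>a\<bar>\<^sup>2) / t"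
proof -
  define c where "c = 1/r\<^sup>2"
  have c: "0 < c" using r by (simp add: c_def)
  have Jc: "Jf \<nu> c = 1/t" using r by (simp add: c_def)
  define g where "g = \<alpha>/(2*\<beta>)"
  have g: "0 \<le> g" "g \<le> 1" using ab by (auto simp: g_def field_simps)
  have A: "Hr \<nu> R ((2*a\<^sup>2) * c) \<le> (G * (2*a\<^sup>2) powr (\<alpha>/2) + 2*a\<^sup>2) * Jf \<nu> c"
    using G c sc up hr Jc t by (intro term1_lemma) auto
  have "(2*a\<^sup>2) powr (\<alpha>/2) = 2 powr (\<alpha>/2) * \<bar>a\<bar> powr \<alpha>"
    by (simp add: powr_mult sq_powr)
  also have "\<dots> \<le> 2 * \<bar>a\<bar> powr \<alpha>" using ab by (intro mult_right_mono pw_le_self) auto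
  finally have B: "(2*a\<^sup>2) powr (\<alpha>/2) \<le> 2 * \<bar>a\<bar> powr \<alpha>" .
  have "(G * (2*a\<^sup>2) powr (\<alpha>/2) + 2*a\<^sup>2) * Jf \<nu> c \<le> (G * (2 * \<bar>a\<bar> powr \<alpha>) + 2*a\<^sup>2) * (1/t)"
    unfolding Jc using B G t by (intro mult_right_mono add_right_mono mult_left_mono) auto
  also have "\<dots> = (2*G * \<bar>a\<bar> powr \<alpha> + 2 * \<bar>a\<bar>\<^sup>2) / t" by simp
  finally have le2: "(G * (2*a\<^sup>2) powr (\<alpha>/2) + 2*a\<^sup>2) * Jf \<nu> c \<le> (2*G * \<bar>a\<bar> powr \<alpha> + 2 * \<bar>a\<bar>\<^sup>2) / t" .
  have A': "Hr \<nu> R (2*a\<^sup>2/r\<^sup>2) \<le> (G * (2*a\<^sup>2) powr (\<alpha>/2) + 2*a\<^sup>2) * Jf \<nu> c"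
    using A by (simp add: c_def)
  have T1: "Hr \<nu> R (2*a\<^sup>2/r\<^sup>2) \<le> (2*G * \<bar>a\<bar> powr \<alpha> + 2 * \<bar>a\<bar>\<^sup>2) / t"
    using A' le2 by linarith
  have T2: "Hr \<nu> R (sqrt (2/r\<^sup>2)) \<le> (2*G\<^sup>2 + 4*G\<^sup>2*\<tau>) * t powr g / t"
  proof (cases "r \<le> 1/2")
    case True
    define k where "k = sqrt 2 * r"
    have h: "sqrt 2 * r \<le> 2 * r" using sqrt2_less_2 r by (intro mult_right_mono) auto
    have k1: "k \<le> 1" using h True unfolding k_def by linarith
    have k: "0 < k" "k \<le> 1" using r k1 by (auto simp: k_def)
    have eq: "sqrt (2/r\<^sup>2) = k * c" using r by (simp add: k_def c_def real_sqrt_divide field_simps power2_eq_square)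
    have "Hr \<nu> R (sqrt (2/r\<^sup>2)) \<le> Jf \<nu> (k * c)" using hr eq k c by simp
    also have "\<dots> \<le> G * k powr (\<alpha>/2) * Jf \<nu> c" using sc k c by simp
    finally have h1: "Hr \<nu> R (sqrt (2/r\<^sup>2)) \<le> G * k powr (\<alpha>/2) * (1/t)" using Jc by simp
    have "k powr (\<alpha>/2) \<le> (sqrt 2 * G * t powr (1/\<beta>)) powr (\<alpha>/2)"
      using r True k ab by (intro powr_mono2) (auto simp: k_def)
    also have "\<dots> = (sqrt 2 * G) powr (\<alpha>/2) * t powr g"
      using ab by (simp add: powr_mult powr_powr g_def mult.commute)
    also have "(sqrt 2 * G) powr (\<alpha>/2) \<le> sqrt 2 * G"
    proof -
      have "1 * 1 \<le> sqrt 2 * G" using G by (intro mult_mono) auto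
      thus ?thesis using ab by (intro pw_le_self) auto
    qed
    also have "sqrt 2 * G \<le> 2 * G" using G sqrt2_less_2 by simp
    finally have h2: "k powr (\<alpha>/2) \<le> 2 * G * t powr g" using t by (simp add: mult_right_mono)
    have "G * k powr (\<alpha>/2) * (1/t) \<le> G * (2 * G * t powr g) * (1/t)"
      using h2 G t by (intro mult_right_mono mult_left_mono) auto
    with h1 have "Hr \<nu> R (sqrt (2/r\<^sup>2)) \<le> G * (2 * G * t powr g) * (1/t)" by linarith
    also have "\<dots> \<le> (2*G\<^sup>2 + 4*G\<^sup>2*\<tau>) * t powr g / t"
      using G t by (simp add: power2_eq_square divide_right_mono)
    finally show ?thesis .
  next
    case False
    have e: "sqrt (2/r\<^sup>2) = sqrt 2 / r" using r by (simp add: real_sqrt_divide)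
    have h0: "Hr \<nu> R (sqrt (2/r\<^sup>2)) \<le> G * (sqrt 2 / r)" using hr[rule_format, of "sqrt 2 / r"] r by (simp add: e)
    have "sqrt 2 / r \<le> 4" using False sqrt2_less_2 r by (simp add: field_simps)
    hence "G * (sqrt 2 / r) \<le> G * 4" using G by (intro mult_left_mono) auto
    hence a1: "Hr \<nu> R (sqrt (2/r\<^sup>2)) \<le> 4 * G" using h0 by simp
    have tg: "1/G \<le> t powr g" using tgam_low[of t G g] r False t G g by simp
    have "4 * G = 4*G\<^sup>2*\<tau> * (1/G) / \<tau>" using G t by (simp add: field_simps power2_eq_square)
    also have "\<dots> \<le> 4*G\<^sup>2*\<tau> * t powr g / \<tau>"
      using tg G t by (intro divide_right_mono mult_left_mono) auto
    also have "\<dots> \<le> 4*G\<^sup>2*\<tau> * t powr g / t"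
      using G t by (intro divide_left_mono) auto
    also have "\<dots> \<le> (2*G\<^sup>2 + 4*G\<^sup>2*\<tau>) * t powr g / t"
      using G t by (intro divide_right_mono mult_right_mono) auto
    finally show ?thesis using a1 by simp
  qed
  have "L \<le> (2*G * \<bar>a\<bar> powr \<alpha> + 2 * \<bar>a\<bar>\<^sup>2) / t + (2*G\<^sup>2 + 4*G\<^sup>2*\<tau>) * t powr g / t"
    using L T1 T2 by simp
  also have "\<dots> = (2*G * \<bar>a\<bar> powr \<alpha> + 2 * \<bar>a\<bar>\<^sup>2 + (2*G\<^sup>2 + 4*G\<^sup>2*\<tau>) * t powr g) / t"
    by (simp add: add_divide_distrib)
  also have "\<dots> \<le> (2*G + 2 + 2*G\<^sup>2 + 4*G\<^sup>2*\<tau>) * (t powr g + \<bar>a\<bar> powr \<alpha> + \<bar>a\<bar>\<^sup>2) / t"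
    using G t by (intro combine3) auto
  finally show ?thesis by (simp add: g_def)
qed

lemma cube23: fixes r :: real assumes "0 < r" shows "(r powr (2/3))^3 = r\<^sup>2"
proof -
  have "(r powr (2/3))^3 = (r powr (2/3)) powr 3" by (simp add: powr_numeral)
  also have "\<dots> = r powr 2" by (simp add: powr_powr)
  also have "\<dots> = r\<^sup>2" using assms by simp
  finally show ?thesis .
qed

lemma ineq2_alg:
  fixes \<nu> :: "real \<Rightarrow> real"
  assumes G: "1 \<le> G" and ab: "0 < \<alpha>" "\<alpha> \<le> \<beta>" "\<beta> < 2" and t: "0 < t" "t \<le> \<tau>"
    and r: "0 < r" "Jf \<nu> (1/r\<^sup>2) = 1/t" "r \<le> 1/2 \<longrightarrow> r \<le> G * t powr (1/\<beta>)" "1/2 < r \<longrightarrow> 1/G \<le> t"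
    and sc: "\<forall>c \<kappa>. 0 < c \<and> 0 < \<kappa> \<and> \<kappa> \<le> 1 \<longrightarrow> Jf \<nu> (\<kappa>*c) \<le> G * \<kappa> powr (\<alpha>/2) * Jf \<nu> c"
    and up: "\<forall>c \<kappa>. 0 < c \<and> 1 \<le> \<kappa> \<longrightarrow> Jf \<nu> (\<kappa>*c) \<le> \<kappa> * Jf \<nu> c"
    and hr: "\<forall>c. 0 \<le> c \<longrightarrow> Hr \<nu> R c \<le> G * c powr (\<beta>/2) \<and> Hr \<nu> R c \<le> G * c \<and> Hr \<nu> R c \<le> Jf \<nu> c"
    and L: "L \<le> Hr \<nu> R (\<bar>a\<bar>/r\<^sup>2) + Hr \<nu> R (1/(r powr (2/3))\<^sup>2)"
  shows "L \<le> (G + 1 + G\<^sup>2 + 4*G\<^sup>2*\<tau>) * (t powr (\<alpha>/(3*\<beta>)) + \<bar>a\<bar> powr (\<alpha>/2) + \<bar>a\<bar>) / t"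
proof -
  define c where "c = 1/r\<^sup>2"
  have c: "0 < c" using r by (simp add: c_def)
  have Jc: "Jf \<nu> c = 1/t" using r by (simp add: c_def)
  define g where "g = \<alpha>/(3*\<beta>)"
  have g: "0 \<le> g" "g \<le> 1" using ab by (auto simp: g_def field_simps)
  define s where "s = r powr (2/3)"
  have s: "0 < s" using r by (simp add: s_def)
  have s3: "s^3 = r\<^sup>2" using cube23[OF r(1)] by (simp add: s_def)
  have A: "Hr \<nu> R (\<bar>a\<bar> * c) \<le> (G * \<bar>a\<bar> powr (\<alpha>/2) + \<bar>a\<bar>) * Jf \<nu> c"
    using G c sc up hr Jc t by (intro term1_lemma) auto
  have T1: "Hr \<nu> R (\<bar>a\<bar>/r\<^sup>2) \<le> (G * \<bar>a\<bar> powr (\<alpha>/2) + 1 * \<bar>a\<bar>) / t"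
    using A Jc by (simp add: c_def)
  have T2: "Hr \<nu> R (1/s\<^sup>2) \<le> (G\<^sup>2 + 4*G\<^sup>2*\<tau>) * t powr g / t"
  proof (cases "r \<le> 1/2")
    case True
    have sle: "s \<le> 1" using True r by (auto simp: s_def intro!: powr_le1)
    have eq: "1/s\<^sup>2 = s * c"
    proof -
      have "s * c = s / s^3" using s3 by (simp add: c_def)
      also have "\<dots> = 1/s\<^sup>2" using s by (simp add: power_def numeral_eq_Suc)
      finally show ?thesis by simp
    qed
    have "Hr \<nu> R (1/s\<^sup>2) \<le> Jf \<nu> (s * c)" using hr[rule_format, of "1/s\<^sup>2"] eq s c by simp
    also have "\<dots> \<le> G * s powr (\<alpha>/2) * Jf \<nu> c" using sc s sle c by simp
    finally have h1: "Hr \<nu> R (1/s\<^sup>2) \<le> G * s powr (\<alpha>/2) * (1/t)" using Jc by simp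
    have "s powr (\<alpha>/2) = r powr (\<alpha>/3)" by (simp add: s_def powr_powr)
    also have "\<dots> \<le> (G * t powr (1/\<beta>)) powr (\<alpha>/3)"
      using r True ab by (intro powr_mono2) auto
    also have "\<dots> = G powr (\<alpha>/3) * t powr g"
      using ab by (simp add: powr_mult powr_powr g_def mult.commute)
    also have "G powr (\<alpha>/3) \<le> G" using G ab by (intro pw_le_self) auto
    finally have h2: "s powr (\<alpha>/2) \<le> G * t powr g" using t by (simp add: mult_right_mono)
    have "G * s powr (\<alpha>/2) * (1/t) \<le> G * (G * t powr g) * (1/t)"
      using h2 G t by (intro mult_right_mono mult_left_mono) auto
    with h1 have "Hr \<nu> R (1/s\<^sup>2) \<le> G * (G * t powr g) * (1/t)" by linarith
    also have "\<dots> \<le> (G\<^sup>2 + 4*G\<^sup>2*\<tau>) * t powr g / t"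
      using G t by (simp add: power2_eq_square divide_right_mono)
    finally show ?thesis .
  next
    case False
    have shalf: "1/2 \<le> s"
    proof (cases "r \<le> 1")
      case True
      hence "r \<le> s" unfolding s_def using r by (intro pw_ge_self) auto
      thus ?thesis using False by simp
    next
      case False
      hence "1 \<le> s" unfolding s_def by (intro ge_one_powr_ge_zero) auto
      thus ?thesis by simp
    qed
    have h0: "Hr \<nu> R (1/s\<^sup>2) \<le> G * (1/s\<^sup>2)" using hr[rule_format, of "1/s\<^sup>2"] by simp
    have "(1/2)\<^sup>2 \<le> s\<^sup>2" using shalf by (intro power_mono) auto
    hence "1/s\<^sup>2 \<le> 4" using s by (simp add: field_simps)
    hence "G * (1/s\<^sup>2) \<le> G * 4" using G by (intro mult_left_mono) auto
    hence a1: "Hr \<nu> R (1/s\<^sup>2) \<le> 4 * G" using h0 by simp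
    have tg: "1/G \<le> t powr g" using tgam_low[of t G g] r False t G g by simp
    have "4 * G = 4*G\<^sup>2*\<tau> * (1/G) / \<tau>" using G t by (simp add: field_simps power2_eq_square)
    also have "\<dots> \<le> 4*G\<^sup>2*\<tau> * t powr g / \<tau>"
      using tg G t by (intro divide_right_mono mult_left_mono) auto
    also have "\<dots> \<le> 4*G\<^sup>2*\<tau> * t powr g / t"
      using G t by (intro divide_left_mono) auto
    also have "\<dots> \<le> (G\<^sup>2 + 4*G\<^sup>2*\<tau>) * t powr g / t"
      using G t by (intro divide_right_mono mult_right_mono) auto
    finally show ?thesis using a1 by simp
  qed
  have "L \<le> (G * \<bar>a\<bar> powr (\<alpha>/2) + 1 * \<bar>a\<bar>) / t + (G\<^sup>2 + 4*G\<^sup>2*\<tau>) * t powr g / t"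
    using L T1 T2 by (simp add: s_def)
  also have "\<dots> = (G * \<bar>a\<bar> powr (\<alpha>/2) + 1 * \<bar>a\<bar> + (G\<^sup>2 + 4*G\<^sup>2*\<tau>) * t powr g) / t"
    by (simp add: add_divide_distrib)
  also have "\<dots> \<le> (G + 1 + G\<^sup>2 + 4*G\<^sup>2*\<tau>) * (t powr g + \<bar>a\<bar> powr (\<alpha>/2) + \<bar>a\<bar>) / t"
    using G t by (intro combine3) auto
  finally show ?thesis by (simp add: g_def)
qed

lemma sqrt_powr_g: fixes x a :: real shows "0 \<le> x \<Longrightarrow> sqrt x powr a = x powr (a/2)"
  by (simp add: powr_half_sqrt[symmetric] powr_powr)

lemma inv_bound:
  fixes r t G \<alpha> :: real
  assumes r: "0 < r" and G: "1 \<le> G" and t: "0 < t" and low: "t powr (1/\<alpha>) / G \<le> r"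
  shows "1/r \<le> G * t powr (-1/\<alpha>)"
proof -
  have p: "0 < t powr (1/\<alpha>) / G" using t G by simp
  hence "0 < r * (t powr (1/\<alpha>) / G)" using r by (rule mult_pos_pos[rotated])
  hence "1/r \<le> 1/(t powr (1/\<alpha>) / G)" using low r p by (intro divide_left_mono) auto
  also have "\<dots> = G * t powr (-1/\<alpha>)" using t G by (simp add: powr_minus_divide[of t "1/\<alpha>", simplified])
  finally show ?thesis .
qed

lemma ineq3_alg:
  fixes \<nu> :: "real \<Rightarrow> real"
  assumes G: "1 \<le> G" and ab: "0 < \<alpha>" "\<alpha> \<le> \<beta>" "\<beta> < 2" and t: "0 < t"
    and ri: "0 < ri" "t powr (1/\<alpha>) / G \<le> ri" and rj: "0 < rj" "t powr (1/\<alpha>) / G \<le> rj"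
    and hr: "\<forall>c. 0 \<le> c \<longrightarrow> Hr \<nu> R c \<le> G * c powr (\<beta>/2) \<and> Hr \<nu> R c \<le> G * c \<and> Hr \<nu> R c \<le> Jf \<nu> c"
    and L: "L \<le> Hr \<nu> R (2*a\<^sup>2/(ri*rj)) + Hr \<nu> R (sqrt (2/(ri*rj)))"
  shows "L \<le> (2*G^3 + 2*G\<^sup>2) * (\<bar>a\<bar> powr \<beta> * t powr (- \<beta>/\<alpha>) + t powr (- \<beta>/(2*\<alpha>)))"
proof -
  define ip where "ip = 1/(ri*rj)"
  define U where "U = G\<^sup>2 * t powr (-2/\<alpha>)"
  have ip0: "0 \<le> ip" using ri rj by (simp add: ip_def)
  have U0: "0 \<le> U" by (simp add: U_def)
  have "1/ri * (1/rj) \<le> (G * t powr (-1/\<alpha>)) * (G * t powr (-1/\<alpha>))"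
    using inv_bound[OF ri(1) G t ri(2)] inv_bound[OF rj(1) G t rj(2)] ri rj G by (intro mult_mono) auto
  also have "\<dots> = U" by (simp add: U_def power2_eq_square powr_add[symmetric] mult_ac)
  finally have ipU: "ip \<le> U" by (simp add: ip_def)
  have "Hr \<nu> R (2*a\<^sup>2/(ri*rj)) \<le> G * (2*a\<^sup>2*ip) powr (\<beta>/2)"
    using hr[rule_format, of "2*a\<^sup>2*ip"] ip0 by (simp add: ip_def)
  also have "(2*a\<^sup>2*ip) powr (\<beta>/2) \<le> (2*a\<^sup>2*U) powr (\<beta>/2)"
    using ab ip0 ipU by (intro powr_mono2 mult_left_mono) auto
  also have "(2*a\<^sup>2*U) powr (\<beta>/2) = 2 powr (\<beta>/2) * \<bar>a\<bar> powr \<beta> * (G powr \<beta> * t powr (- \<beta>/\<alpha>))"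
  proof -
    have "(G\<^sup>2) powr (\<beta>/2) = G powr \<beta>" using G by (simp add: sq_powr)
    moreover have "(t powr (-2/\<alpha>)) powr (\<beta>/2) = t powr (- \<beta>/\<alpha>)" by (simp add: powr_powr)
    ultimately show ?thesis by (simp add: U_def powr_mult sq_powr)
  qed
  finally have T1a: "Hr \<nu> R (2*a\<^sup>2/(ri*rj)) \<le> G * (2 powr (\<beta>/2) * \<bar>a\<bar> powr \<beta> * (G powr \<beta> * t powr (- \<beta>/\<alpha>)))"
    using G by (simp add: mult_left_mono)
  have "G * (2 powr (\<beta>/2) * \<bar>a\<bar> powr \<beta> * (G powr \<beta> * t powr (- \<beta>/\<alpha>))) \<le> G * (2 * \<bar>a\<bar> powr \<beta> * (G\<^sup>2 * t powr (- \<beta>/\<alpha>)))"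
    using G ab by (intro mult_left_mono mult_mono pw_le_self pw_le_sq) auto
  also have "\<dots> = 2*G^3 * (\<bar>a\<bar> powr \<beta> * t powr (- \<beta>/\<alpha>))" by (simp add: power2_eq_square power3_eq_cube)
  finally have T1: "Hr \<nu> R (2*a\<^sup>2/(ri*rj)) \<le> 2*G^3 * (\<bar>a\<bar> powr \<beta> * t powr (- \<beta>/\<alpha>))"
    using T1a by linarith
  have "Hr \<nu> R (sqrt (2/(ri*rj))) \<le> G * (sqrt (2*ip)) powr (\<beta>/2)"
    using hr[rule_format, of "sqrt (2*ip)"] ip0 by (simp add: ip_def)
  also have "(sqrt (2*ip)) powr (\<beta>/2) = (2*ip) powr (\<beta>/4)" using ip0 by (simp add: sqrt_powr_g)
  also have "\<dots> \<le> (2*U) powr (\<beta>/4)" using ab ip0 ipU by (intro powr_mono2) auto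
  also have "\<dots> = 2 powr (\<beta>/4) * (G powr (\<beta>/2) * t powr (- \<beta>/(2*\<alpha>)))"
  proof -
    have "(G\<^sup>2) powr (\<beta>/4) = G powr (\<beta>/2)" using G by (simp add: sq_powr)
    moreover have "(t powr (-2/\<alpha>)) powr (\<beta>/4) = t powr (- \<beta>/(2*\<alpha>))" by (simp add: powr_powr)
    ultimately show ?thesis by (simp add: U_def powr_mult)
  qed
  finally have T2a: "Hr \<nu> R (sqrt (2/(ri*rj))) \<le> G * (2 powr (\<beta>/4) * (G powr (\<beta>/2) * t powr (- \<beta>/(2*\<alpha>))))"
    using G by (simp add: mult_left_mono)
  have "G * (2 powr (\<beta>/4) * (G powr (\<beta>/2) * t powr (- \<beta>/(2*\<alpha>)))) \<le> G * (2 * (G * t powr (- \<beta>/(2*\<alpha>))))"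
    using G ab by (intro mult_left_mono mult_mono pw_le_self) auto
  also have "\<dots> = 2*G\<^sup>2 * t powr (- \<beta>/(2*\<alpha>))" by (simp add: power2_eq_square)
  finally have T2: "Hr \<nu> R (sqrt (2/(ri*rj))) \<le> 2*G\<^sup>2 * t powr (- \<beta>/(2*\<alpha>))"
    using T2a by linarith
  have "L \<le> 2*G^3 * (\<bar>a\<bar> powr \<beta> * t powr (- \<beta>/\<alpha>)) + 2*G\<^sup>2 * t powr (- \<beta>/(2*\<alpha>))"
    using L T1 T2 by linarith
  also have "\<dots> \<le> (2*G^3 + 2*G\<^sup>2) * (\<bar>a\<bar> powr \<beta> * t powr (- \<beta>/\<alpha>) + t powr (- \<beta>/(2*\<alpha>)))"
    using G by (simp add: algebra_simps)
  finally show ?thesis .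
qed

lemma ineq4_alg:
  fixes \<nu> :: "real \<Rightarrow> real"
  assumes G: "1 \<le> G" and ab: "0 < \<alpha>" "\<alpha> \<le> \<beta>" "\<beta> < 2" and t: "0 < t"
    and r: "0 < r" "t powr (1/\<alpha>) / G \<le> r"
    and hr: "\<forall>c. 0 \<le> c \<longrightarrow> Hr \<nu> R c \<le> G * c powr (\<beta>/2) \<and> Hr \<nu> R c \<le> G * c \<and> Hr \<nu> R c \<le> Jf \<nu> c"
    and L: "L \<le> Hr \<nu> R (\<bar>a\<bar>/r\<^sup>2) + Hr \<nu> R (1/(r powr (2/3))\<^sup>2)"
  shows "L \<le> (G^3 + G^3) * (\<bar>a\<bar> powr (\<beta>/2) * t powr (- \<beta>/\<alpha>) + t powr (- 2*\<beta>/(3*\<alpha>)))"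
proof -
  define ic where "ic = 1/r\<^sup>2"
  define U where "U = G\<^sup>2 * t powr (-2/\<alpha>)"
  have ic0: "0 \<le> ic" using r by (simp add: ic_def)
  have "(1/r)\<^sup>2 \<le> (G * t powr (-1/\<alpha>))\<^sup>2"
    using inv_bound[OF r(1) G t r(2)] r by (intro power_mono) auto
  also have "\<dots> = U" by (simp add: U_def power2_eq_square powr_add[symmetric] mult_ac)
  finally have icU: "ic \<le> U" by (simp add: ic_def power_divide)
  have "Hr \<nu> R (\<bar>a\<bar>/r\<^sup>2) \<le> G * (\<bar>a\<bar>*ic) powr (\<beta>/2)"
    using hr[rule_format, of "\<bar>a\<bar>*ic"] ic0 by (simp add: ic_def)
  also have "(\<bar>a\<bar>*ic) powr (\<beta>/2) \<le> (\<bar>a\<bar>*U) powr (\<beta>/2)"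
    using ab ic0 icU by (intro powr_mono2 mult_left_mono) auto
  also have "(\<bar>a\<bar>*U) powr (\<beta>/2) = \<bar>a\<bar> powr (\<beta>/2) * (G powr \<beta> * t powr (- \<beta>/\<alpha>))"
  proof -
    have "(G\<^sup>2) powr (\<beta>/2) = G powr \<beta>" using G by (simp add: sq_powr)
    moreover have "(t powr (-2/\<alpha>)) powr (\<beta>/2) = t powr (- \<beta>/\<alpha>)" by (simp add: powr_powr)
    ultimately show ?thesis by (simp add: U_def powr_mult)
  qed
  finally have T1a: "Hr \<nu> R (\<bar>a\<bar>/r\<^sup>2) \<le> G * (\<bar>a\<bar> powr (\<beta>/2) * (G powr \<beta> * t powr (- \<beta>/\<alpha>)))"
    using G by (simp add: mult_left_mono)
  have "G * (\<bar>a\<bar> powr (\<beta>/2) * (G powr \<beta> * t powr (- \<beta>/\<alpha>))) \<le> G * (\<bar>a\<bar> powr (\<beta>/2) * (G\<^sup>2 * t powr (- \<beta>/\<alpha>)))"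
    using G ab by (intro mult_left_mono mult_right_mono pw_le_sq) auto
  also have "\<dots> = G^3 * (\<bar>a\<bar> powr (\<beta>/2) * t powr (- \<beta>/\<alpha>))" by (simp add: power2_eq_square power3_eq_cube)
  finally have T1: "Hr \<nu> R (\<bar>a\<bar>/r\<^sup>2) \<le> G^3 * (\<bar>a\<bar> powr (\<beta>/2) * t powr (- \<beta>/\<alpha>))"
    using T1a by linarith
  have e: "1/(r powr (2/3))\<^sup>2 = ic powr (2/3)"
  proof -
    have "(r powr (2/3))\<^sup>2 = (r powr (2/3)) powr 2" by (simp add: powr_numeral)
    also have "\<dots> = r powr (4/3)" by (simp add: powr_powr)
    finally have a: "(r powr (2/3))\<^sup>2 = r powr (4/3)" .
    have "ic powr (2/3) = 1 / (r\<^sup>2) powr (2/3)" by (simp add: ic_def powr_divide)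
    also have "(r\<^sup>2) powr (2/3) = r powr (4/3)" using r by (simp add: sq_powr)
    finally show ?thesis using a by simp
  qed
  have "Hr \<nu> R (1/(r powr (2/3))\<^sup>2) \<le> G * (ic powr (2/3)) powr (\<beta>/2)"
    using hr[rule_format, of "ic powr (2/3)"] by (simp add: e)
  also have "(ic powr (2/3)) powr (\<beta>/2) = ic powr (\<beta>/3)" by (simp add: powr_powr)
  also have "\<dots> \<le> U powr (\<beta>/3)" using ab ic0 icU by (intro powr_mono2) auto
  also have "\<dots> = G powr (2*\<beta>/3) * t powr (- 2*\<beta>/(3*\<alpha>))"
  proof -
    have "(G\<^sup>2) powr (\<beta>/3) = G powr (2*\<beta>/3)" using G by (simp add: sq_powr)
    moreover have "(t powr (-2/\<alpha>)) powr (\<beta>/3) = t powr (- 2*\<beta>/(3*\<alpha>))" by (simp add: powr_powr mult.commute)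
    ultimately show ?thesis by (simp add: U_def powr_mult)
  qed
  finally have T2a: "Hr \<nu> R (1/(r powr (2/3))\<^sup>2) \<le> G * (G powr (2*\<beta>/3) * t powr (- 2*\<beta>/(3*\<alpha>)))"
    using G by (simp add: mult_left_mono)
  have "G * (G powr (2*\<beta>/3) * t powr (- 2*\<beta>/(3*\<alpha>))) \<le> G * (G\<^sup>2 * t powr (- 2*\<beta>/(3*\<alpha>)))"
    using G ab by (intro mult_left_mono mult_right_mono pw_le_sq) auto
  also have "\<dots> = G^3 * t powr (- 2*\<beta>/(3*\<alpha>))" by (simp add: power2_eq_square power3_eq_cube)
  finally have T2: "Hr \<nu> R (1/(r powr (2/3))\<^sup>2) \<le> G^3 * t powr (- 2*\<beta>/(3*\<alpha>))"
    using T2a by linarith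
  have "L \<le> G^3 * (\<bar>a\<bar> powr (\<beta>/2) * t powr (- \<beta>/\<alpha>)) + G^3 * t powr (- 2*\<beta>/(3*\<alpha>))"
    using L T1 T2 by linarith
  also have "\<dots> \<le> (G^3 + G^3) * (\<bar>a\<bar> powr (\<beta>/2) * t powr (- \<beta>/\<alpha>) + t powr (- 2*\<beta>/(3*\<alpha>)))"
    using G by (simp add: algebra_simps)
  finally show ?thesis .
qed

lemma index_dens2:
  assumes L: "levy_assms d \<nu> \<eta>4 \<alpha> \<beta> Cl Cu" and i: "i \<in> {1..d}"
  shows "dens2 (\<nu> i) \<alpha> \<beta> Cl Cu \<eta>4"
proof -
  have g: "0 < \<eta>4" "0 < \<alpha>" "\<alpha> \<le> \<beta>" "\<beta> < 2" "0 < Cl" "0 < Cu" using L by (auto simp: levy_assms_def)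
  have h: "\<nu> i \<in> borel_measurable borel \<and>
        (\<forall>x. x \<noteq> 0 \<longrightarrow> 0 \<le> \<nu> i x) \<and>
        (\<forall>x. \<nu> i (- x) = \<nu> i x) \<and>
        integrable lborel (\<lambda>x. min (x\<^sup>2) 1 * \<nu> i x) \<and>
        (\<integral>\<^sup>+ x. ennreal (\<nu> i x) \<partial>lborel) = \<infinity> \<and>
        (\<exists>D. (\<forall>x\<in>{0<..<\<eta>4}. (\<nu> i has_real_derivative D x) (at x)) \<and>
             continuous_on {0<..<\<eta>4} D \<and>
             (\<forall>x\<in>{0<..<\<eta>4}. D x < 0) \<and>
             (\<forall>x\<in>{0<..<\<eta>4}. \<forall>y\<in>{0<..<\<eta>4}. x \<le> y \<longrightarrow> - D y / y \<le> - D x / x)) \<and>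
        (\<forall>lam \<theta>. 1 \<le> lam \<and> 0 \<le> \<theta> \<longrightarrow> psi (\<nu> i) (lam * \<theta>) \<ge> Cl * lam powr \<alpha> * psi (\<nu> i) \<theta>) \<and>
        (\<forall>lam \<theta>. 1 \<le> lam \<and> 1 \<le> \<theta> \<longrightarrow> psi (\<nu> i) (lam * \<theta>) \<le> Cu * lam powr \<beta> * psi (\<nu> i) \<theta>)"
    using L i unfolding levy_assms_def by blast
  then obtain D where D: "\<forall>x\<in>{0<..<\<eta>4}. (\<nu> i has_real_derivative D x) (at x)" "\<forall>x\<in>{0<..<\<eta>4}. D x < 0"
    by blast
  have pos: "0 < \<nu> i x" if x: "0 < x" "x < \<eta>4" for x
  proof -
    define y where "y = (x + \<eta>4)/2"
    have y: "x < y" "y < \<eta>4" using x by (auto simp: y_def)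
    have "\<nu> i x > \<nu> i y"
    proof (rule DERIV_neg_imp_decreasing[OF y(1)])
      fix z assume "x \<le> z" "z \<le> y"
      hence "z \<in> {0<..<\<eta>4}" using x y by auto
      thus "\<exists>yy. DERIV (\<nu> i) z :> yy \<and> yy < 0" using D by blast
    qed
    moreover have "0 \<le> \<nu> i y" using h y x by auto
    ultimately show ?thesis by simp
  qed
  show ?thesis
    unfolding dens2_def dens_def dens2_axioms_def
    using h g pos by auto
qed

lemma mu_bound:
  assumes T: "trunc_assms d \<nu> \<delta>0 \<mu>" and k: "k \<in> {1..d}" and \<delta>: "0 < \<delta>" "\<delta> \<le> \<delta>0"
    and nn: "\<And>x. x \<noteq> 0 \<Longrightarrow> 0 \<le> \<nu> k x" and sym: "\<And>x. \<nu> k (- x) = \<nu> k x"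
  shows "\<And>w. w \<noteq> 0 \<Longrightarrow> \<mu> \<delta> k w \<le> \<nu> k w * indicator {x. \<bar>x\<bar> < 2*\<delta>} w"
proof -
  have h: "(\<forall>x\<in>{0<..\<delta>}. \<mu> \<delta> k x = \<nu> k x) \<and>
        (\<forall>x\<in>{\<delta><..<2*\<delta>}. 0 \<le> \<mu> \<delta> k x \<and> \<mu> \<delta> k x \<le> \<nu> k x) \<and>
        (\<forall>x. 2*\<delta> \<le> x \<longrightarrow> \<mu> \<delta> k x = 0) \<and>
        (\<forall>x. \<mu> \<delta> k (- x) = \<mu> \<delta> k x)"
    using T k \<delta> unfolding trunc_assms_def by auto
  have pos: "\<mu> \<delta> k w \<le> \<nu> k w * indicator {x. \<bar>x\<bar> < 2*\<delta>} w" if w: "0 < w" for w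
  proof (cases "w \<le> \<delta>")
    case True thus ?thesis using h w \<delta> by (auto simp: indicator_def)
  next
    case False
    show ?thesis
    proof (cases "w < 2*\<delta>")
      case True thus ?thesis using h w False by (auto simp: indicator_def)
    next
      case False2: False
      thus ?thesis using h w by (auto simp: indicator_def)
    qed
  qed
  fix w :: real assume w: "w \<noteq> 0"
  show "\<mu> \<delta> k w \<le> \<nu> k w * indicator {x. \<bar>x\<bar> < 2*\<delta>} w"
  proof (cases "0 < w")
    case True thus ?thesis by (rule pos)
  next
    case False
    hence "0 < - w" using w by simp
    from pos[OF this] show ?thesis using h sym[of w] by (simp add: indicator_def)
  qed
qed

lemma final_mono:
  fixes K c X t :: real
  assumes "K \<le> c" "0 \<le> X" "0 < t" "L \<le> K * X / t"
  shows "L \<le> c * X / t"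
proof -
  have "K * X \<le> c * X" using assms by (intro mult_right_mono) auto
  hence "K * X / t \<le> c * X / t" using assms by (intro divide_right_mono) auto
  thus ?thesis using assms by linarith
qed

lemma final_mono2:
  fixes K c X :: real
  assumes "K \<le> c" "0 \<le> X" "L \<le> K * X"
  shows "L \<le> c * X"
proof -
  have "K * X \<le> c * X" using assms by (intro mult_right_mono) auto
  thus ?thesis using assms by linarith
qed

theorem lemma3p3:
  fixes d :: nat and \<nu> :: "nat \<Rightarrow> real \<Rightarrow> real" and \<mu> :: "real \<Rightarrow> nat \<Rightarrow> real \<Rightarrow> real"
    and \<eta>4 \<alpha> \<beta> Cl Cu \<delta>0 \<tau> \<delta> :: real
  assumes "levy_assms d \<nu> \<eta>4 \<alpha> \<beta> Cl Cu"
    and "trunc_assms d \<nu> \<delta>0 \<mu>"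
    and "0 < \<tau>" and "0 < \<delta>" and "\<delta> \<le> \<delta>0"
  shows "\<exists>c. \<forall>a t i j k. 0 < t \<and> t \<le> \<tau> \<and> i \<in> {1..d} \<and> j \<in> {1..d} \<and> k \<in> {1..d} \<longrightarrow>
    (LINT w|lborel. min (((\<bar>a\<bar> + \<bar>w\<bar>)\<^sup>2 * \<bar>w\<bar>\<^sup>2) / (hinv (\<nu> i) (1/t))\<^sup>2) 1 * \<mu> \<delta> i w)
       \<le> c * (t powr (\<alpha> / (2*\<beta>)) + \<bar>a\<bar> powr \<alpha> + \<bar>a\<bar>\<^sup>2) / t \<and>
    (LINT w|lborel. min (((\<bar>a\<bar> + \<bar>w\<bar>) * \<bar>w\<bar>\<^sup>2) / (hinv (\<nu> i) (1/t))\<^sup>2) 1 * \<mu> \<delta> i w)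
       \<le> c * (t powr (\<alpha> / (3*\<beta>)) + \<bar>a\<bar> powr (\<alpha>/2) + \<bar>a\<bar>) / t \<and>
    (LINT w|lborel. min (((\<bar>a\<bar> + \<bar>w\<bar>)\<^sup>2 * \<bar>w\<bar>\<^sup>2) / (hinv (\<nu> i) (1/t) * hinv (\<nu> j) (1/t))) 1 * \<mu> \<delta> k w)
       \<le> c * (\<bar>a\<bar> powr \<beta> * t powr (- \<beta>/\<alpha>) + t powr (- \<beta>/(2*\<alpha>))) \<and>
    (LINT w|lborel. min (((\<bar>a\<bar> + \<bar>w\<bar>) * \<bar>w\<bar>\<^sup>2) / (hinv (\<nu> i) (1/t))\<^sup>2) 1 * \<mu> \<delta> k w)
       \<le> c * (\<bar>a\<bar> powr (\<beta>/2) * t powr (- \<beta>/\<alpha>) + t powr (- 2*\<beta>/(3*\<alpha>)))"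
proof -
  note L = assms(1) and T = assms(2) and tau = assms(3) and del = assms(4,5)
  have ab: "0 < \<alpha>" "\<alpha> \<le> \<beta>" "\<beta> < 2" using L by (auto simp: levy_assms_def)
  have d2: "dens2 (\<nu> i) \<alpha> \<beta> Cl Cu \<eta>4" if "i \<in> {1..d}" for i using index_dens2[OF L that] .
  have ds: "dens (\<nu> i)" if "i \<in> {1..d}" for i using d2[OF that] by (simp add: dens2_def)
  have R1: "2*\<delta> \<le> 1" using T del by (auto simp: trunc_assms_def)
  have "\<forall>i\<in>{1..d}. \<exists>G0. \<forall>G\<ge>G0. good (\<nu> i) \<alpha> \<beta> \<tau> (2*\<delta>) G"
    using dens2.good_ex[OF d2 tau R1] by blast
  then obtain f where f: "\<forall>i\<in>{1..d}. \<forall>G\<ge>f i. good (\<nu> i) \<alpha> \<beta> \<tau> (2*\<delta>) G"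
    by (metis bchoice)
  define G where "G = 1 + (\<Sum>i\<in>{1..d}. \<bar>f i\<bar>)"
  have Gi: "f i \<le> G" if "i \<in> {1..d}" for i
  proof -
    have "\<bar>f i\<bar> \<le> (\<Sum>i\<in>{1..d}. \<bar>f i\<bar>)" using that by (intro member_le_sum) auto
    thus ?thesis by (simp add: G_def)
  qed
  have gd: "good (\<nu> i) \<alpha> \<beta> \<tau> (2*\<delta>) G" if "i \<in> {1..d}" for i using f Gi that by blast
  have G1: "1 \<le> G" by (simp add: G_def sum_nonneg)
  define K1 where "K1 = 2*G + 2 + 2*G\<^sup>2 + 4*G\<^sup>2*\<tau>"
  define K2 where "K2 = G + 1 + G\<^sup>2 + 4*G\<^sup>2*\<tau>"
  define K3 where "K3 = 2*G^3 + 2*G\<^sup>2"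
  define K4 where "K4 = G^3 + G^3"
  have K0: "0 \<le> K1" "0 \<le> K2" "0 \<le> K3" "0 \<le> K4" using G1 tau by (auto simp: K1_def K2_def K3_def K4_def)
  define c where "c = K1 + K2 + K3 + K4"
  show ?thesis
  proof (intro exI[of _ c] allI impI)
    fix a t :: real and i j k :: nat
    assume H: "0 < t \<and> t \<le> \<tau> \<and> i \<in> {1..d} \<and> j \<in> {1..d} \<and> k \<in> {1..d}"
    hence t: "0 < t" "t \<le> \<tau>" and i: "i \<in> {1..d}" and j: "j \<in> {1..d}" and k: "k \<in> {1..d}" by auto
    have tfacts: "0 < hinv (\<nu> l) (1/t) \<and> Jf (\<nu> l) (1/(hinv (\<nu> l) (1/t))\<^sup>2) = 1/t
        \<and> t powr (1/\<alpha>) / G \<le> hinv (\<nu> l) (1/t)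
        \<and> (hinv (\<nu> l) (1/t) \<le> 1/2 \<longrightarrow> hinv (\<nu> l) (1/t) \<le> G * t powr (1/\<beta>))
        \<and> (1/2 < hinv (\<nu> l) (1/t) \<longrightarrow> 1/G \<le> t)" if "l \<in> {1..d}" for l
      using gd[OF that] t unfolding good_def by blast
    have scf: "\<forall>c \<kappa>. 0 < c \<and> 0 < \<kappa> \<and> \<kappa> \<le> 1 \<longrightarrow> Jf (\<nu> l) (\<kappa>*c) \<le> G * \<kappa> powr (\<alpha>/2) * Jf (\<nu> l) c"
      if "l \<in> {1..d}" for l using gd[OF that] unfolding good_def by blast
    have upf: "\<forall>c \<kappa>. 0 < c \<and> 1 \<le> \<kappa> \<longrightarrow> Jf (\<nu> l) (\<kappa>*c) \<le> \<kappa> * Jf (\<nu> l) c"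
      if "l \<in> {1..d}" for l using gd[OF that] unfolding good_def by blast
    have hrf: "\<forall>c. 0 \<le> c \<longrightarrow> Hr (\<nu> l) (2*\<delta>) c \<le> G * c powr (\<beta>/2) \<and> Hr (\<nu> l) (2*\<delta>) c \<le> G * c \<and> Hr (\<nu> l) (2*\<delta>) c \<le> Jf (\<nu> l) c"
      if "l \<in> {1..d}" for l using gd[OF that] unfolding good_def by blast
    have muf: "\<And>w. w \<noteq> 0 \<Longrightarrow> \<mu> \<delta> l w \<le> \<nu> l w * indicator {x. \<bar>x\<bar> < 2*\<delta>} w" if "l \<in> {1..d}" for l
      by (rule mu_bound[OF T that del]) (use dens.nn[OF ds[OF that]] L that in \<open>auto simp: levy_assms_def\<close>)
    define ri where "ri = hinv (\<nu> i) (1/t)"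
    define rj where "rj = hinv (\<nu> j) (1/t)"
    have ri: "0 < ri" "Jf (\<nu> i) (1/ri\<^sup>2) = 1/t" "t powr (1/\<alpha>) / G \<le> ri"
        "ri \<le> 1/2 \<longrightarrow> ri \<le> G * t powr (1/\<beta>)" "1/2 < ri \<longrightarrow> 1/G \<le> t"
      using tfacts[OF i] by (auto simp: ri_def)
    have rj: "0 < rj" "t powr (1/\<alpha>) / G \<le> rj"
      using tfacts[OF j] by (auto simp: rj_def)
    have X1: "0 \<le> t powr (\<alpha> / (2*\<beta>)) + \<bar>a\<bar> powr \<alpha> + \<bar>a\<bar>\<^sup>2" by simp
    have X2: "0 \<le> t powr (\<alpha> / (3*\<beta>)) + \<bar>a\<bar> powr (\<alpha>/2) + \<bar>a\<bar>" by simp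
    have X3: "0 \<le> \<bar>a\<bar> powr \<beta> * t powr (- \<beta>/\<alpha>) + t powr (- \<beta>/(2*\<alpha>))" by simp
    have X4: "0 \<le> \<bar>a\<bar> powr (\<beta>/2) * t powr (- \<beta>/\<alpha>) + t powr (- 2*\<beta>/(3*\<alpha>))" by simp
    have L1: "(LINT w|lborel. min (((\<bar>a\<bar> + \<bar>w\<bar>)\<^sup>2 * \<bar>w\<bar>\<^sup>2) / ri\<^sup>2) 1 * \<mu> \<delta> i w)
        \<le> Hr (\<nu> i) (2*\<delta>) (2*a\<^sup>2/ri\<^sup>2) + Hr (\<nu> i) (2*\<delta>) (sqrt (2/ri\<^sup>2))"
    proof -
      have sp: "\<And>w. w \<noteq> 0 \<Longrightarrow> min (((\<bar>a\<bar> + \<bar>w\<bar>)\<^sup>2 * \<bar>w\<bar>\<^sup>2) / ri\<^sup>2) 1 \<le> min ((2*a\<^sup>2/ri\<^sup>2) * w\<^sup>2) 1 + min (sqrt (2/ri\<^sup>2) * w\<^sup>2) 1"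
        using ri by (intro split_sq) simp
      show ?thesis by (rule dens.split_bound[OF ds[OF i] muf[OF i] _ _ sp]) (use ri in auto)
    qed
    have C1: "(LINT w|lborel. min (((\<bar>a\<bar> + \<bar>w\<bar>)\<^sup>2 * \<bar>w\<bar>\<^sup>2) / ri\<^sup>2) 1 * \<mu> \<delta> i w)
        \<le> c * (t powr (\<alpha> / (2*\<beta>)) + \<bar>a\<bar> powr \<alpha> + \<bar>a\<bar>\<^sup>2) / t"
      using final_mono[OF _ X1 t(1) ineq1_alg[OF G1 ab t ri(1,2,4,5) scf[OF i] upf[OF i] hrf[OF i] L1]] K0
      by (simp add: c_def K1_def)
    define s where "s = ri powr (2/3)"
    have s: "0 < s" "ri\<^sup>2 = s^3" using ri(1) cube23[OF ri(1)] by (auto simp: s_def)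
    have L2: "(LINT w|lborel. min (((\<bar>a\<bar> + \<bar>w\<bar>) * \<bar>w\<bar>\<^sup>2) / ri\<^sup>2) 1 * \<mu> \<delta> i w)
        \<le> Hr (\<nu> i) (2*\<delta>) (\<bar>a\<bar>/ri\<^sup>2) + Hr (\<nu> i) (2*\<delta>) (1/(ri powr (2/3))\<^sup>2)"
    proof -
      have sp: "\<And>w. w \<noteq> 0 \<Longrightarrow> min (((\<bar>a\<bar> + \<bar>w\<bar>) * \<bar>w\<bar>\<^sup>2) / ri\<^sup>2) 1 \<le> min ((\<bar>a\<bar>/ri\<^sup>2) * w\<^sup>2) 1 + min ((1/(ri powr (2/3))\<^sup>2) * w\<^sup>2) 1"
        using s unfolding s_def by (intro split_cube) auto
      show ?thesis by (rule dens.split_bound[OF ds[OF i] muf[OF i] _ _ sp]) (use ri in auto)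
    qed
    have C2: "(LINT w|lborel. min (((\<bar>a\<bar> + \<bar>w\<bar>) * \<bar>w\<bar>\<^sup>2) / ri\<^sup>2) 1 * \<mu> \<delta> i w)
        \<le> c * (t powr (\<alpha> / (3*\<beta>)) + \<bar>a\<bar> powr (\<alpha>/2) + \<bar>a\<bar>) / t"
      using final_mono[OF _ X2 t(1) ineq2_alg[OF G1 ab t ri(1,2,4,5) scf[OF i] upf[OF i] hrf[OF i] L2]] K0
      by (simp add: c_def K2_def)
    have L3: "(LINT w|lborel. min (((\<bar>a\<bar> + \<bar>w\<bar>)\<^sup>2 * \<bar>w\<bar>\<^sup>2) / (ri * rj)) 1 * \<mu> \<delta> k w)
        \<le> Hr (\<nu> k) (2*\<delta>) (2*a\<^sup>2/(ri*rj)) + Hr (\<nu> k) (2*\<delta>) (sqrt (2/(ri*rj)))"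
    proof -
      have sp: "\<And>w. w \<noteq> 0 \<Longrightarrow> min (((\<bar>a\<bar> + \<bar>w\<bar>)\<^sup>2 * \<bar>w\<bar>\<^sup>2) / (ri*rj)) 1 \<le> min ((2*a\<^sup>2/(ri*rj)) * w\<^sup>2) 1 + min (sqrt (2/(ri*rj)) * w\<^sup>2) 1"
        using ri rj by (intro split_sq) simp
      show ?thesis by (rule dens.split_bound[OF ds[OF k] muf[OF k] _ _ sp]) (use ri rj in auto)
    qed
    have C3: "(LINT w|lborel. min (((\<bar>a\<bar> + \<bar>w\<bar>)\<^sup>2 * \<bar>w\<bar>\<^sup>2) / (ri * rj)) 1 * \<mu> \<delta> k w)
        \<le> c * (\<bar>a\<bar> powr \<beta> * t powr (- \<beta>/\<alpha>) + t powr (- \<beta>/(2*\<alpha>)))"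
      using final_mono2[OF _ X3 ineq3_alg[OF G1 ab t(1) ri(1,3) rj hrf[OF k] L3]] K0
      by (simp add: c_def K3_def)
    have L4: "(LINT w|lborel. min (((\<bar>a\<bar> + \<bar>w\<bar>) * \<bar>w\<bar>\<^sup>2) / ri\<^sup>2) 1 * \<mu> \<delta> k w)
        \<le> Hr (\<nu> k) (2*\<delta>) (\<bar>a\<bar>/ri\<^sup>2) + Hr (\<nu> k) (2*\<delta>) (1/(ri powr (2/3))\<^sup>2)"
    proof -
      have sp: "\<And>w. w \<noteq> 0 \<Longrightarrow> min (((\<bar>a\<bar> + \<bar>w\<bar>) * \<bar>w\<bar>\<^sup>2) / ri\<^sup>2) 1 \<le> min ((\<bar>a\<bar>/ri\<^sup>2) * w\<^sup>2) 1 + min ((1/(ri powr (2/3))\<^sup>2) * w\<^sup>2) 1"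
        using s unfolding s_def by (intro split_cube) auto
      show ?thesis by (rule dens.split_bound[OF ds[OF k] muf[OF k] _ _ sp]) (use ri in auto)
    qed
    have C4: "(LINT w|lborel. min (((\<bar>a\<bar> + \<bar>w\<bar>) * \<bar>w\<bar>\<^sup>2) / ri\<^sup>2) 1 * \<mu> \<delta> k w)
        \<le> c * (\<bar>a\<bar> powr (\<beta>/2) * t powr (- \<beta>/\<alpha>) + t powr (- 2*\<beta>/(3*\<alpha>)))"
      using final_mono2[OF _ X4 ineq4_alg[OF G1 ab t(1) ri(1,3) hrf[OF k] L4]] K0
      by (simp add: c_def K4_def)
    show "(LINT w|lborel. min (((\<bar>a\<bar> + \<bar>w\<bar>)\<^sup>2 * \<bar>w\<bar>\<^sup>2) / (hinv (\<nu> i) (1/t))\<^sup>2) 1 * \<mu> \<delta> i w)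
       \<le> c * (t powr (\<alpha> / (2*\<beta>)) + \<bar>a\<bar> powr \<alpha> + \<bar>a\<bar>\<^sup>2) / t \<and>
    (LINT w|lborel. min (((\<bar>a\<bar> + \<bar>w\<bar>) * \<bar>w\<bar>\<^sup>2) / (hinv (\<nu> i) (1/t))\<^sup>2) 1 * \<mu> \<delta> i w)
       \<le> c * (t powr (\<alpha> / (3*\<beta>)) + \<bar>a\<bar> powr (\<alpha>/2) + \<bar>a\<bar>) / t \<and>
    (LINT w|lborel. min (((\<bar>a\<bar> + \<bar>w\<bar>)\<^sup>2 * \<bar>w\<bar>\<^sup>2) / (hinv (\<nu> i) (1/t) * hinv (\<nu> j) (1/t))) 1 * \<mu> \<delta> k w)
       \<le> c * (\<bar>a\<bar> powr \<beta> * t powr (- \<beta>/\<alpha>) + t powr (- \<beta>/(2*\<alpha>))) \<and>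
    (LINT w|lborel. min (((\<bar>a\<bar> + \<bar>w\<bar>) * \<bar>w\<bar>\<^sup>2) / (hinv (\<nu> i) (1/t))\<^sup>2) 1 * \<mu> \<delta> k w)
       \<le> c * (\<bar>a\<bar> powr (\<beta>/2) * t powr (- \<beta>/\<alpha>) + t powr (- 2*\<beta>/(3*\<alpha>)))"
      using C1 C2 C3 C4 by (simp add: ri_def rj_def)
  qed
qed

end
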